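(* Let $r\in\{1,\dots,n\}$. A run $R$ of an $n$-DPDA is an $r$-return if and only if at least one of the following holds: (1) $|R|=1$ and the only step of $R$ performs $\mathsf{pop}^r$; (2) the first step of $R$ is a read, or performs $\mathsf{pop}^k$ for some $k<r$, or performs $\mathsf{push}^k_\gamma$ for some $k\ne r$, and $R[1,|R|]$ is an $r$-return; (3) the first step of $R$ performs $\mathsf{push}^k_\gamma$ for some $k\ge r$, and $R[1,|R|]=S\circ T$ where $S$ is a $k$-return and $T$ is an $r$-return.
   Context: Stacks: fix order $n\ge1$, finite stack alphabet $\Gamma$. A $0$-stack is $(\gamma,x)$ with $\gamma\in\Gamma$, $x=(x_n,\dots,x_1)$ a vector of $n$ positive integers (position). For $k\in\{1,\dots,n\}$ a $k$-stack is a finite list $[s_1,\dots,s_m]$ ($m\ge0$) of nonempty $(k-1)$-stacks such that for some $x_n,\dots,x_{k+1}$, every position in $s_i$ has the form $(x_n,\dots,x_{k+1},i,y_{k-1},\dots,y_1)$. The top is at the right; $s^k:s^{k-1}$ appends at the top (right-associative); for $s^r=t^r:t^{r-1}:\dots:t^k$, $\mathrm{top}^k(s^r)=t^k$. Equality of stacks includes positions. For $k<n$, $\mathsf p_{+1}(s^k)$ adds $1$ to the $(n-k)$-th coordinate of all positions. Operations of order $k\ge1$: $\mathsf{pop}^k(s^r:\dots:s^k:s^{k-1})=s^r:\dots:s^k$, defined only if the topmost $k$-stack has at least two $(k-1)$-stacks; $\mathsf{push}^k_\gamma(s^r:\dots:s^0)=s^r:\dots:s^{k+1}:(s^k:\dots:s^0):\mathsf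 p_{+1}(s^{k-1}:\dots:s^1:(\gamma,x))$ where $s^0=(\gamma',x)$. An $n$-DPDA has transitions determined by state and topmost stack symbol, each either $\mathrm{read}(\vec q)$ ($\vec q:A\to Q$ injective; leads to $(\vec q(a),s)$, reading $a$) or $(q,op)$ with $op$ a stack operation of order $\le n$ (leads to $(q,op(s))$ if defined). Configurations are (state, nonempty $n$-stack). A run is a finite sequence $R=c_0,\dots,c_m$ with each $c_i$ a successor of $c_{i-1}$; $R(i)=c_i$, $|R|=m$, $R[i,j]=c_i,\dots,c_j$; $\circ$ is concatenation. $\mathrm{top}^k(c)$, $\mathsf{pop}^k(c)$ refer to the stack of $c$. History: for a run $R$ and a $0$-stack $s^0$ of $R(|R|)$, $\mathrm{hist}(R,s^0)$ is a $0$-stack of $R(0)$: if $|R|=0$ it is $s^0$; if $R=S\circ T$, $|T|=1$, and the last step is a read or a $\mathsf{pop}$, or a $\mathsf{push}^r_\gamma$ with $s^0$ not in the topmost $(r-1)$-stack of $R(|R|)$, it is $\mathrm{hist}(S,s^0)$; if the last step is $\mathsf{push}^r_\gamma$ and $s^0$ is in the topmost $(r-1)$-stack of $R(|R|)$, it is $\mathrm{hist}(S,t^0)$ with $t^0$ equal to $s^0$ with the $(n-r+1)$-th position coordinate decreased by $1$. For a $k$-stack $s^k$ of $R(|R|)$, $k\ge1$, $\mathrm{hist}(R,s^k)$ is the $k$-stack of $R(0)$ containing $\mathrm{hist}(R,s^0)$ for all $0$-stacks $s^0$ of $s^k$. For $k\in\{0,\dots,n\}$, $R$ is $k$-upper if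 $\mathrm{hist}(R,\mathrm{top}^k(R(|R|)))=\mathrm{top}^k(R(0))$. For $k\in\{1,\dots,n\}$, $R$ is a $k$-return if $\mathrm{hist}(R,\mathrm{top}^{k-1}(R(|R|)))=\mathrm{top}^{k-1}(\mathsf{pop}^k(R(0)))$ and $R[i,|R|]$ is not $(k-1)$-upper for every $i\in\{0,\dots,|R|-1\}$. *)

theory Defs
  imports Main
begin

text \<open>A stack is a tree: a 0-stack is a symbol, a k-stack
 (k \<ge> 1) is a list of nonempty (k-1)-stacks, the top being the LAST element.
 Inside an n-stack the position of every 0-stack (x_n,...,x_1) is exactly its
 path of 1-based indices (x_n is the index in the outermost list), so positions
 are not stored but computed; a position is a nat list [x_n, ..., x_1].\<close>

datatype 'g stk = Sym 'g | Lst "'g stk list"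

fun is_stack :: "nat \<Rightarrow> 'g stk \<Rightarrow> bool" where
  "is_stack 0 (Sym g) = True"
| "is_stack (Suc k) (Lst xs) = (\<forall>x\<in>set xs. is_stack k x \<and> x \<noteq> Lst [])"
| "is_stack _ _ = False"

fun positions :: "'g stk \<Rightarrow> nat list set"
and positions_list :: "nat \<Rightarrow> 'g stk list \<Rightarrow> nat list set" where
  "positions (Sym g) = {[]}"
| "positions (Lst xs) = positions_list 1 xs"
| "positions_list i [] = {}"
| "positions_list i (x # xs) = ((#) i ` positions x) \<union> positions_list (Suc i) xs"

lemma size_last_less[termination_simp]:
  "xs \<noteq> [] \<Longrightarrow> size (last xs) < Suc (size_list size xs)"
  by (induct xs) auto

fun toppath :: "'g stk \<Rightarrow> nat list" where
  "toppath (Sym g) = []"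
| "toppath (Lst xs) = (if xs = [] then [] else length xs # toppath (last xs))"

fun topsym :: "'g stk \<Rightarrow> 'g" where
  "topsym (Sym g) = g"
| "topsym (Lst xs) = (if xs = [] then undefined else topsym (last xs))"

fun settop0 :: "'g \<Rightarrow> 'g stk \<Rightarrow> 'g stk" where
  "settop0 g (Sym _) = Sym g"
| "settop0 g (Lst xs) = (if xs = [] then Lst [] else Lst (butlast xs @ [settop0 g (last xs)]))"

text \<open>push / pop acting at depth d below the outermost level, i.e. on the
 topmost (n-d)-stack of an n-stack.\<close>
fun push_d :: "nat \<Rightarrow> 'g \<Rightarrow> 'g stk \<Rightarrow> 'g stk" where
  "push_d 0 g (Lst xs) = (if xs = [] then Lst [] else Lst (xs @ [settop0 g (last xs)]))"
| "push_d (Suc d) g (Lst xs) = (if xs = [] then Lst [] else Lst (butlast xs @ [push_d d g (last xs)]))"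
| "push_d _ _ (Sym x) = Sym x"

fun pop_d :: "nat \<Rightarrow> 'g stk \<Rightarrow> 'g stk option" where
  "pop_d 0 (Lst xs) = (if 2 \<le> length xs then Some (Lst (butlast xs)) else None)"
| "pop_d (Suc d) (Lst xs) =
     (if xs = [] then None else map_option (\<lambda>y. Lst (butlast xs @ [y])) (pop_d d (last xs)))"
| "pop_d _ (Sym x) = None"

datatype 'g op = Pop nat | Push nat 'g

fun op_order :: "'g op \<Rightarrow> nat" where
  "op_order (Pop k) = k"
| "op_order (Push k g) = k"

fun apply_op :: "nat \<Rightarrow> 'g op \<Rightarrow> 'g stk \<Rightarrow> 'g stk option" where
  "apply_op n (Pop k) s = pop_d (n - k) s"
| "apply_op n (Push k g) s = Some (push_d (n - k) g s)"

datatype ('q, 'g, 'a) trans = Read "'a \<Rightarrow> 'q" | Op 'q "'g op"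

type_synonym ('q, 'g, 'a) delta = "'q \<Rightarrow> 'g \<Rightarrow> ('q, 'g, 'a) trans option"

type_synonym ('q, 'g) config = "'q \<times> 'g stk"

definition is_dpda :: "nat \<Rightarrow> ('q, 'g, 'a) delta \<Rightarrow> bool" where
  "is_dpda n \<delta> \<longleftrightarrow> 1 \<le> n \<and>
     (\<forall>q g f. \<delta> q g = Some (Read f) \<longrightarrow> inj f) \<and>
     (\<forall>q g q' p. \<delta> q g = Some (Op q' p) \<longrightarrow> 1 \<le> op_order p \<and> op_order p \<le> n)"

definition wf_config :: "nat \<Rightarrow> ('q, 'g) config \<Rightarrow> bool" where
  "wf_config n c \<longleftrightarrow> is_stack n (snd c) \<and> snd c \<noteq> Lst []"

definition trans_at :: "('q, 'g, 'a) delta \<Rightarrow> ('q, 'g) config \<Rightarrow> ('q, 'g, 'a) trans option" where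
  "trans_at \<delta> c = \<delta> (fst c) (topsym (snd c))"

definition succ :: "nat \<Rightarrow> ('q, 'g, 'a) delta \<Rightarrow> ('q, 'g) config \<Rightarrow> ('q, 'g) config \<Rightarrow> bool" where
  "succ n \<delta> c c' \<longleftrightarrow> (case trans_at \<delta> c of
      None \<Rightarrow> False
    | Some (Read f) \<Rightarrow> (\<exists>a. c' = (f a, snd c))
    | Some (Op q p) \<Rightarrow> fst c' = q \<and> apply_op n p (snd c) = Some (snd c'))"

text \<open>A run R = c_0,...,c_m is the list [c_0,...,c_m]; |R| = length R - 1,
 R(i) = R!i, R[i,|R|] = drop i R.\<close>
definition is_run :: "nat \<Rightarrow> ('q, 'g, 'a) delta \<Rightarrow> ('q, 'g) config list \<Rightarrow> bool" where
  "is_run n \<delta> R \<longleftrightarrow> R \<noteq> [] \<and> (\<forall>c\<in>set R. wf_config n c) \<and>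
     (\<forall>i. Suc i < length R \<longrightarrow> succ n \<delta> (R ! i) (R ! Suc i))"

definition performs :: "('q, 'g, 'a) delta \<Rightarrow> ('q, 'g) config \<Rightarrow> 'g op \<Rightarrow> bool" where
  "performs \<delta> c p \<longleftrightarrow> (\<exists>q. trans_at \<delta> c = Some (Op q p))"

definition is_read :: "('q, 'g, 'a) delta \<Rightarrow> ('q, 'g) config \<Rightarrow> bool" where
  "is_read \<delta> c \<longleftrightarrow> (\<exists>f. trans_at \<delta> c = Some (Read f))"

definition hist_step :: "nat \<Rightarrow> ('q, 'g, 'a) delta \<Rightarrow> ('q, 'g) config \<Rightarrow> ('q, 'g) config \<Rightarrow> nat list \<Rightarrow> nat list" where
  "hist_step n \<delta> c c' x = (case trans_at \<delta> c of
      Some (Op q (Push r g)) \<Rightarrow>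
        (if take (n - r + 1) x = take (n - r + 1) (toppath (snd c'))
         then x[n - r := x ! (n - r) - 1] else x)
    | _ \<Rightarrow> x)"

text \<open>hist_rev works on the reversed run: hist(S o T, s) = hist(S, back(T, s)) for |T| = 1.\<close>
fun hist_rev :: "nat \<Rightarrow> ('q, 'g, 'a) delta \<Rightarrow> ('q, 'g) config list \<Rightarrow> nat list \<Rightarrow> nat list" where
  "hist_rev n \<delta> (c' # c # cs) x = hist_rev n \<delta> (c # cs) (hist_step n \<delta> c c' x)"
| "hist_rev n \<delta> _ x = x"

definition hist0 :: "nat \<Rightarrow> ('q, 'g, 'a) delta \<Rightarrow> ('q, 'g) config list \<Rightarrow> nat list \<Rightarrow> nat list" where
  "hist0 n \<delta> R x = hist_rev n \<delta> (rev R) x"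

text \<open>A k-stack of an n-stack is identified by the common prefix (length n-k) of the
 positions of its 0-stacks. hist_stk R k P is the k-stack of R(0) containing the
 histories of all 0-stacks of the k-stack P of R(|R|).\<close>
definition hist_stk :: "nat \<Rightarrow> ('q, 'g, 'a) delta \<Rightarrow> ('q, 'g) config list \<Rightarrow> nat \<Rightarrow> nat list \<Rightarrow> nat list" where
  "hist_stk n \<delta> R k P = (THE P'. (\<exists>x\<in>positions (snd (hd R)). take (n - k) x = P') \<and>
      (\<forall>x\<in>positions (snd (last R)). take (n - k) x = P \<longrightarrow> take (n - k) (hist0 n \<delta> R x) = P'))"

definition top_id :: "nat \<Rightarrow> nat \<Rightarrow> 'g stk \<Rightarrow> nat list" where
  "top_id n k s = take (n - k) (toppath s)"

definition upper :: "nat \<Rightarrow> ('q, 'g, 'a) delta \<Rightarrow> nat \<Rightarrow> ('q, 'g) config list \<Rightarrow> bool" where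
  "upper n \<delta> k R \<longleftrightarrow> hist_stk n \<delta> R k (top_id n k (snd (last R))) = top_id n k (snd (hd R))"

definition is_return :: "nat \<Rightarrow> ('q, 'g, 'a) delta \<Rightarrow> nat \<Rightarrow> ('q, 'g) config list \<Rightarrow> bool" where
  "is_return n \<delta> k R \<longleftrightarrow>
     (\<exists>s'. apply_op n (Pop k) (snd (hd R)) = Some s' \<and>
        hist_stk n \<delta> R (k - 1) (top_id n (k - 1) (snd (last R))) = top_id n (k - 1) s') \<and>
     (\<forall>i < length R - 1. \<not> upper n \<delta> (k - 1) (drop i R))"

end

theory Submission
  imports Defs
begin


fun vp :: "'g stk \<Rightarrow> nat list \<Rightarrow> bool" where
  "vp (Sym g) [] = True"
| "vp (Lst xs) (i # is) = (0 < i \<and> i \<le> length xs \<and> vp (xs ! (i - 1)) is)"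
| "vp _ _ = False"

fun sub :: "'g stk \<Rightarrow> nat list \<Rightarrow> 'g stk" where
  "sub s [] = s"
| "sub (Lst xs) (i # is) = sub (xs ! (i - 1)) is"
| "sub (Sym g) (i # is) = Sym g"

lemma pos_vp:
  fixes s :: "'g stk" and xs :: "'g stk list"
  shows "z \<in> positions s \<longleftrightarrow> vp s z"
  "z \<in> positions_list j xs \<longleftrightarrow> (\<exists>i y. z = i # y \<and> j \<le> i \<and> i < j + length xs \<and> vp (xs ! (i - j)) y)"
proof (induction s and j xs arbitrary: z and z rule: positions_positions_list.induct)
  case (1 g) then show ?case by (cases z) auto
next
  case (2 xs) then show ?case by (cases z) auto
next
  case (3 i) then show ?case by auto
next
  case (4 i x xs)
  show ?case
  proof
    assume "z \<in> positions_list i (x # xs)"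
    then consider "z \<in> (#) i ` positions x" | "z \<in> positions_list (Suc i) xs" by auto
    then show "\<exists>ia y. z = ia # y \<and> i \<le> ia \<and> ia < i + length (x # xs) \<and> vp ((x # xs) ! (ia - i)) y"
    proof cases
      case 1 then show ?thesis using 4 by auto
    next
      case 2
      then obtain ia y where h: "z = ia # y" "Suc i \<le> ia" "ia < Suc i + length xs" "vp (xs ! (ia - Suc i)) y"
        using 4 by blast
      then have "(x # xs) ! (ia - i) = xs ! (ia - Suc i)"
        by (metis Suc_diff_Suc Suc_le_lessD nth_Cons_Suc)
      then show ?thesis using h by auto
    qed
  next
    assume "\<exists>ia y. z = ia # y \<and> i \<le> ia \<and> ia < i + length (x # xs) \<and> vp ((x # xs) ! (ia - i)) y"
    then obtain ia y where h: "z = ia # y" "i \<le> ia" "ia < i + length (x # xs)" "vp ((x # xs) ! (ia - i)) y" by blast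
    show "z \<in> positions_list i (x # xs)"
    proof (cases "ia = i")
      case True then show ?thesis using h 4 by auto
    next
      case False
      then have "ia - i = Suc (ia - Suc i)" using h by auto
      then show ?thesis using h 4 False by auto
    qed
  qed
qed

definition wfs :: "nat \<Rightarrow> 'g stk \<Rightarrow> bool" where
  "wfs k s \<longleftrightarrow> is_stack k s \<and> s \<noteq> Lst []"

lemma wfs_0: "wfs 0 s \<longleftrightarrow> (\<exists>g. s = Sym g)"
  unfolding wfs_def by (cases s) auto

lemma wfs_Suc: "wfs (Suc k) s \<longleftrightarrow> (\<exists>xs. s = Lst xs \<and> xs \<noteq> [] \<and> (\<forall>x\<in>set xs. wfs k x))"
  unfolding wfs_def by (cases s) auto

lemma nth_mem': "0 < i \<Longrightarrow> i \<le> length xs \<Longrightarrow> xs ! (i - Suc 0) \<in> set xs"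
  by (intro nth_mem) auto

lemma is_stack_len: "is_stack k s \<Longrightarrow> vp s x \<Longrightarrow> length x = k"
proof (induction x arbitrary: s k)
  case Nil then show ?case by (cases s; cases k) auto
next
  case (Cons i x)
  then obtain xs k' where s: "s = Lst xs" "k = Suc k'" by (cases s; cases k) auto
  with Cons have i: "0 < i" "i \<le> length xs" and "vp (xs ! (i - Suc 0)) x" by auto
  from i have "xs ! (i - Suc 0) \<in> set xs" by (rule nth_mem')
  with Cons.prems s have "is_stack k' (xs ! (i - Suc 0))" by auto
  with Cons.IH \<open>vp (xs ! (i - Suc 0)) x\<close> s show ?case by auto
qed

lemma wfs_len: "wfs k s \<Longrightarrow> vp s x \<Longrightarrow> length x = k"
  unfolding wfs_def using is_stack_len by blast

lemma vp_pos: "vp s x \<Longrightarrow> i < length x \<Longrightarrow> 0 < x ! i"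
proof (induction x arbitrary: s i)
  case Nil then show ?case by auto
next
  case (Cons a x)
  then obtain xs where "s = Lst xs" by (cases s) auto
  with Cons show ?case by (cases i) auto
qed

lemma last_nth': "xs \<noteq> [] \<Longrightarrow> xs ! (length xs - Suc 0) = last xs"
  by (simp add: last_conv_nth)

lemma top_vp: "wfs k s \<Longrightarrow> vp s (toppath s) \<and> length (toppath s) = k"
proof (induction k arbitrary: s)
  case 0 then show ?case by (auto simp: wfs_0)
next
  case (Suc k)
  then obtain xs where s: "s = Lst xs" "xs \<noteq> []" "\<forall>x\<in>set xs. wfs k x" by (auto simp: wfs_Suc)
  then have "wfs k (last xs)" by auto
  with Suc s show ?case by (auto simp: last_nth')
qed

lemma top_max: "wfs k s \<Longrightarrow> vp s x \<Longrightarrow> m < k \<Longrightarrow> take m x = take m (toppath s) \<Longrightarrow> x ! m \<le> toppath s ! m"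
proof (induction m arbitrary: s x k)
  case 0
  then obtain k' where "k = Suc k'" by (cases k) auto
  with 0 obtain xs where s: "s = Lst xs" "xs \<noteq> []" by (auto simp: wfs_Suc)
  with 0 show ?case by (cases x) auto
next
  case (Suc m)
  note P = Suc.prems
  from P obtain k' where k: "k = Suc k'" by (cases k) auto
  with P obtain xs where s: "s = Lst xs" "xs \<noteq> []" "\<forall>x\<in>set xs. wfs k' x" by (auto simp: wfs_Suc)
  with P obtain i y where x: "x = i # y" by (cases x) auto
  with P s have il: "i = length xs" by auto
  with P s x k have "wfs k' (last xs)" "vp (last xs) y" "m < k'" "take m y = take m (toppath (last xs))"
    by (auto simp: last_nth')
  from Suc.IH[OF this] s x k il show ?case by auto
qed

lemma top_sub: "wfs k s \<Longrightarrow> m \<le> k \<Longrightarrow>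
   toppath s = take m (toppath s) @ toppath (sub s (take m (toppath s))) \<and> wfs (k - m) (sub s (take m (toppath s)))"
proof (induction m arbitrary: s k)
  case 0 then show ?case by auto
next
  case (Suc m)
  then obtain k' where k: "k = Suc k'" by (cases k) auto
  with Suc obtain xs where s: "s = Lst xs" "xs \<noteq> []" "\<forall>x\<in>set xs. wfs k' x" by (auto simp: wfs_Suc)
  then have "wfs k' (last xs)" by auto
  with Suc.IH[where s="last xs" and k=k'] Suc.prems s k show ?case by (auto simp: last_nth')
qed

lemma vp_split: "vp s x \<Longrightarrow> m \<le> length x \<Longrightarrow> vp (sub s (take m x)) (drop m x)"
proof (induction m arbitrary: s x)
  case 0 then show ?case by auto
next
  case (Suc m)
  then obtain i y where x: "x = i # y" by (cases x) auto
  with Suc.prems obtain xs where "s = Lst xs" by (cases s) auto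
  with Suc.prems Suc.IH[of "xs ! (i - Suc 0)" y] x show ?case by auto
qed

lemma nth_butlast_app: "xs \<noteq> [] \<Longrightarrow> i < length xs \<Longrightarrow>
  (butlast xs @ [a]) ! i = (if i = length xs - 1 then a else xs ! i)"
  by (auto simp: nth_append nth_butlast)

lemma top_settop: "toppath (settop0 g s) = toppath s"
  by (induction g s rule: settop0.induct) auto

lemma vp_settop: "vp (settop0 g s) x \<longleftrightarrow> vp s x"
proof (induction x arbitrary: s)
  case Nil then show ?case by (cases s) auto
next
  case (Cons i x)
  show ?case
  proof (cases s)
    case (Sym h) then show ?thesis by auto
  next
    case (Lst xs)
    show ?thesis
    proof (cases "xs = []")
      case True then show ?thesis using Lst by auto
    next
      case False
      show ?thesis
      proof (cases "0 < i \<and> i \<le> length xs")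
        case True
        then have "i - 1 < length xs" by auto
        show ?thesis
        proof (cases "i = length xs")
          case True
          then have "(butlast xs @ [settop0 g (last xs)]) ! (i - 1) = settop0 g (last xs)"
            "xs ! (i - 1) = last xs" using False by (auto simp: nth_append last_conv_nth)
          then show ?thesis using Lst False Cons.IH[of "last xs"] \<open>0 < i \<and> i \<le> length xs\<close> by simp
        next
          case F2: False
          then have "(butlast xs @ [settop0 g (last xs)]) ! (i - 1) = xs ! (i - 1)"
            using False \<open>0 < i \<and> i \<le> length xs\<close> by (auto simp: nth_append nth_butlast)
          then show ?thesis using Lst False \<open>0 < i \<and> i \<le> length xs\<close> by simp
        qed
      next
        case F3: False
        then show ?thesis using Lst False by auto
      qed
    qed
  qed
qed

lemma sub_settop: "vp s y \<Longrightarrow> take m y \<noteq> take m (toppath s) \<Longrightarrow> sub (settop0 g s) (take m y) = sub s (take m y)"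
proof (induction m arbitrary: s y)
  case 0 then show ?case by auto
next
  case (Suc m)
  show ?case
  proof (cases y)
    case Nil
    with Suc.prems show ?thesis by (cases s) auto
  next
    case (Cons i z)
    note y = this
  with Suc.prems obtain xs where s: "s = Lst xs" by (cases s) auto
  with Suc.prems y have ne: "xs \<noteq> []" and i: "0 < i" "i \<le> length xs" by auto
  show ?thesis
  proof (cases "i = length xs")
    case True
    with Suc.prems s y ne have "take m z \<noteq> take m (toppath (last xs))" "vp (last xs) z"
      by (auto simp: last_nth')
    with Suc.IH True s y ne show ?thesis by (auto simp: last_nth' nth_butlast_app)
  next
    case False
    with s y ne i show ?thesis by (auto simp: nth_butlast_app)
  qed
  qed
qed


lemma wfs_SucE:
  assumes "wfs (Suc k) s"
  obtains xs where "s = Lst xs" "xs \<noteq> []" "\<forall>x\<in>set xs. wfs k x" "wfs k (last xs)"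
  using assms by (auto simp: wfs_Suc)

lemma top_push: "wfs k s \<Longrightarrow> D < k \<Longrightarrow> toppath (push_d D g s) = (toppath s)[D := toppath s ! D + 1]"
proof (induction D arbitrary: s k)
  case 0
  then obtain k' where k: "k = Suc k'" by (cases k) auto
  with 0 obtain xs where s: "s = Lst xs" "xs \<noteq> []" by (auto elim: wfs_SucE)
  then show ?case by (simp add: top_settop)
next
  case (Suc D)
  then obtain k' where k: "k = Suc k'" by (cases k) auto
  with Suc.prems obtain xs where s: "s = Lst xs" "xs \<noteq> []" "wfs k' (last xs)" by (auto elim: wfs_SucE)
  with Suc.prems k have "D < k'" by auto
  from Suc.IH[OF s(3) this] s show ?case by simp
qed

lemma vp_push: "wfs k s \<Longrightarrow> D < k \<Longrightarrow> vp (push_d D g s) x \<Longrightarrow>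
  vp s (if take (Suc D) x = take (Suc D) (toppath (push_d D g s)) then x[D := x ! D - 1] else x)"
proof (induction D arbitrary: s k x)
  case 0
  then obtain k' where k: "k = Suc k'" by (cases k) auto
  with 0 obtain xs where s: "s = Lst xs" "xs \<noteq> []" by (auto elim: wfs_SucE)
  from 0 s obtain i y where x: "x = i # y" by (cases x) auto
  show ?case
  proof (cases "i = Suc (length xs)")
    case True
    with 0 s x have "vp (settop0 g (last xs)) y" by (simp add: nth_append)
    with True s x show ?thesis by (simp add: vp_settop top_settop last_nth')
  next
    case False
    with 0 s x have "0 < i" "i \<le> Suc (length xs)" by auto
    with False have il: "i \<le> length xs" by auto
    with \<open>0 < i\<close> have "i - Suc 0 < length xs" by auto
    with 0 s x have "vp (xs ! (i - 1)) y" by (auto simp: nth_append)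
    with il \<open>0 < i\<close> False s x show ?thesis by (simp add: top_settop)
  qed
next
  case (Suc D)
  then obtain k' where k: "k = Suc k'" by (cases k) auto
  with Suc.prems obtain xs where s: "s = Lst xs" "xs \<noteq> []" "wfs k' (last xs)" by (auto elim: wfs_SucE)
  with Suc.prems k have Dk: "D < k'" by auto
  from Suc.prems s obtain i y where x: "x = i # y" by (cases x) auto
  show ?case
  proof (cases "i = length xs")
    case True
    with Suc.prems s x have "vp (push_d D g (last xs)) y" by (simp add: nth_append)
    from Suc.IH[OF s(3) Dk this] True s x show ?thesis by (auto simp: last_nth')
  next
    case False
    with Suc.prems s x have i: "0 < i" "i \<le> length xs" by auto
    with False have "i - 1 < length xs - 1" by linarith
    with Suc.prems s x have "vp (xs ! (i - 1)) y"
      by (auto simp: nth_append nth_butlast)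
    with False s x i show ?thesis by simp
  qed
qed

lemma sub_push: "wfs k s \<Longrightarrow> D < k \<Longrightarrow> vp (push_d D g s) y \<Longrightarrow>
  take (Suc E) y \<noteq> take (Suc E) (toppath (push_d D g s)) \<Longrightarrow>
  sub (push_d D g s) (take (Suc E) y) = sub s (if D \<le> E \<and> take (Suc D) (take (Suc E) y) = take (Suc D) (toppath (push_d D g s))
      then (take (Suc E) y)[D := take (Suc E) y ! D - 1] else take (Suc E) y)"
proof (induction D arbitrary: s k y E)
  case 0
  then obtain k' where k: "k = Suc k'" by (cases k) auto
  with 0 obtain xs where s: "s = Lst xs" "xs \<noteq> []" by (auto elim: wfs_SucE)
  from 0 s obtain i z where y: "y = i # z" by (cases y) auto
  show ?case
  proof (cases "i = Suc (length xs)")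
    case True
    with 0 s y have v: "vp (settop0 g (last xs)) z" by (simp add: nth_append)
    then have v2: "vp (last xs) z" by (simp add: vp_settop)
    from 0(4) True s y have "take E z \<noteq> take E (toppath (last xs))" by (simp add: top_settop)
    from sub_settop[OF v2 this] True s y show ?thesis by (simp add: top_settop last_nth' nth_append)
  next
    case False
    with 0 s y have "0 < i" "i \<le> Suc (length xs)" by auto
    with False have il: "i - 1 < length xs" by auto
    with False s y show ?thesis by (simp add: top_settop nth_append)
  qed
next
  case (Suc D)
  then obtain k' where k: "k = Suc k'" by (cases k) auto
  with Suc.prems obtain xs where s: "s = Lst xs" "xs \<noteq> []" "wfs k' (last xs)" by (auto elim: wfs_SucE)
  with Suc.prems k have Dk: "D < k'" by auto
  from Suc.prems s obtain i z where y: "y = i # z" by (cases y) auto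
  show ?case
  proof (cases "i = length xs")
    case True
    with Suc.prems s y have v: "vp (push_d D g (last xs)) z" by (simp add: nth_append)
    show ?thesis
    proof (cases E)
      case 0
      with Suc.prems True s y show ?thesis by simp
    next
      case (Suc E')
      with Suc.prems True s y have ne: "take (Suc E') z \<noteq> take (Suc E') (toppath (push_d D g (last xs)))" by simp
      from Suc.IH[OF s(3) Dk v ne] True s y Suc show ?thesis by (auto simp: last_nth' nth_append)
    qed
  next
    case False
    with Suc.prems s y have "0 < i" "i \<le> length xs"
      by (auto simp: nth_append nth_butlast)
    with False s y show ?thesis by (cases E) (auto simp: nth_append nth_butlast)
  qed
qed

lemma pop_some: "wfs k s \<Longrightarrow> D < k \<Longrightarrow> (pop_d D s \<noteq> None) \<longleftrightarrow> 2 \<le> toppath s ! D"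
proof (induction D arbitrary: s k)
  case 0
  then obtain k' where k: "k = Suc k'" by (cases k) auto
  with 0 obtain xs where s: "s = Lst xs" "xs \<noteq> []" by (auto elim: wfs_SucE)
  then show ?case by simp
next
  case (Suc D)
  then obtain k' where k: "k = Suc k'" by (cases k) auto
  with Suc.prems obtain xs where s: "s = Lst xs" "xs \<noteq> []" "wfs k' (last xs)" by (auto elim: wfs_SucE)
  with Suc.prems k have "D < k'" by auto
  from Suc.IH[OF s(3) this] s show ?case by simp
qed

lemma top_pop: "wfs k s \<Longrightarrow> D < k \<Longrightarrow> pop_d D s = Some s' \<Longrightarrow>
   take (Suc D) (toppath s') = take D (toppath s) @ [toppath s ! D - 1]"
proof (induction D arbitrary: s k s')
  case 0
  then obtain k' where k: "k = Suc k'" by (cases k) auto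
  with 0 obtain xs where s: "s = Lst xs" "xs \<noteq> []" by (auto elim: wfs_SucE)
  with 0 have "2 \<le> length xs" "s' = Lst (butlast xs)" by (auto split: if_splits)
  moreover then have "butlast xs \<noteq> []" by (cases xs rule: rev_cases) auto
  ultimately show ?case using s by simp
next
  case (Suc D)
  then obtain k' where k: "k = Suc k'" by (cases k) auto
  with Suc.prems obtain xs where s: "s = Lst xs" "xs \<noteq> []" "wfs k' (last xs)" by (auto elim: wfs_SucE)
  with Suc.prems k have Dk: "D < k'" by auto
  from Suc.prems s obtain t where t: "pop_d D (last xs) = Some t" "s' = Lst (butlast xs @ [t])" by auto
  from Suc.IH[OF s(3) Dk t(1)] s t show ?case by simp
qed

lemma vp_pop: "wfs k s \<Longrightarrow> D < k \<Longrightarrow> pop_d D s = Some s' \<Longrightarrow> vp s' x \<Longrightarrow>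
   vp s x \<and> take (Suc D) x \<noteq> take (Suc D) (toppath s)"
proof (induction D arbitrary: s k s' x)
  case 0
  then obtain k' where k: "k = Suc k'" by (cases k) auto
  with 0 obtain xs where s: "s = Lst xs" "xs \<noteq> []" by (auto elim: wfs_SucE)
  with 0 have s': "s' = Lst (butlast xs)" by (auto split: if_splits)
  from 0 s' obtain i y where x: "x = i # y" by (cases x) auto
  with 0 s s' have i: "0 < i" "i \<le> length xs - 1" and v: "vp (butlast xs ! (i - 1)) y" by auto
  have "0 < length xs" using s by auto
  with i have i2: "i - 1 < length xs - 1" "i \<noteq> length xs" by linarith+
  then have "butlast xs ! (i - 1) = xs ! (i - 1)" by (simp add: nth_butlast)
  with v i i2 s x show ?case by auto
next
  case (Suc D)
  then obtain k' where k: "k = Suc k'" by (cases k) auto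
  with Suc.prems obtain xs where s: "s = Lst xs" "xs \<noteq> []" "wfs k' (last xs)" by (auto elim: wfs_SucE)
  with Suc.prems k have Dk: "D < k'" by auto
  from Suc.prems s obtain t where t: "pop_d D (last xs) = Some t" "s' = Lst (butlast xs @ [t])" by auto
  from Suc.prems t obtain i y where x: "x = i # y" by (cases x) auto
  show ?case
  proof (cases "i = length xs")
    case True
    with Suc.prems t x have "vp t y" by (simp add: nth_append)
    from Suc.IH[OF s(3) Dk t(1) this] True s x show ?thesis by (simp add: last_nth')
  next
    case False
    with Suc.prems t x s have i: "0 < i" "i \<le> length xs" by auto
    with False have "i - 1 < length xs - 1" by linarith
    with Suc.prems t x s i False show ?thesis by (auto simp: nth_append nth_butlast)
  qed
qed

lemma sub_pop: "wfs k s \<Longrightarrow> D < k \<Longrightarrow> pop_d D s = Some s' \<Longrightarrow> vp s' y \<Longrightarrow>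
   \<not> (E < D \<and> take (Suc E) y = take (Suc E) (toppath s)) \<Longrightarrow>
   sub s' (take (Suc E) y) = sub s (take (Suc E) y)"
proof (induction D arbitrary: s k s' y E)
  case 0
  then obtain k' where k: "k = Suc k'" by (cases k) auto
  with 0 obtain xs where s: "s = Lst xs" "xs \<noteq> []" by (auto elim: wfs_SucE)
  with 0 have s': "s' = Lst (butlast xs)" by (auto split: if_splits)
  from 0 s' obtain i z where y: "y = i # z" by (cases y) auto
  with 0 s s' show ?case by (auto simp: nth_butlast)
next
  case (Suc D)
  then obtain k' where k: "k = Suc k'" by (cases k) auto
  with Suc.prems obtain xs where s: "s = Lst xs" "xs \<noteq> []" "wfs k' (last xs)" by (auto elim: wfs_SucE)
  with Suc.prems k have Dk: "D < k'" by auto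
  from Suc.prems s obtain t where t: "pop_d D (last xs) = Some t" "s' = Lst (butlast xs @ [t])" by auto
  from Suc.prems t obtain i z where y: "y = i # z" by (cases y) auto
  show ?case
  proof (cases "i = length xs")
    case True
    with Suc.prems t y have v: "vp t z" by (simp add: nth_append)
    show ?thesis
    proof (cases E)
      case 0
      with Suc.prems True s y show ?thesis by simp
    next
      case (Suc E')
      with Suc.prems True s y have "\<not> (E' < D \<and> take (Suc E') z = take (Suc E') (toppath (last xs)))" by simp
      from Suc.IH[OF s(3) Dk t(1) v this] True s y t Suc show ?thesis by (simp add: last_nth' nth_append)
    qed
  next
    case False
    with Suc.prems t y s show ?thesis by (cases E) (auto simp: nth_append nth_butlast)
  qed
qed


lemma step_cases:
  assumes dp: "is_dpda n \<delta>" and st: "succ n \<delta> c c'"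
  obtains (rd) f where "trans_at \<delta> c = Some (Read f)" "snd c' = snd c" "\<And>x. hist_step n \<delta> c c' x = x"
  | (pp) q k where "trans_at \<delta> c = Some (Op q (Pop k))" "1 \<le> k" "k \<le> n" "pop_d (n - k) (snd c) = Some (snd c')"
       "\<And>x. hist_step n \<delta> c c' x = x"
  | (ps) q k g where "trans_at \<delta> c = Some (Op q (Push k g))" "1 \<le> k" "k \<le> n" "snd c' = push_d (n - k) g (snd c)"
       "\<And>x. hist_step n \<delta> c c' x = (if take (Suc (n - k)) x = take (Suc (n - k)) (toppath (snd c'))
             then x[n - k := x ! (n - k) - 1] else x)"
proof -
  from st obtain t where t: "trans_at \<delta> c = Some t" unfolding succ_def by (cases "trans_at \<delta> c") auto
  show ?thesis
  proof (cases t)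
    case (Read f)
    with t st show ?thesis by (intro rd[of f]) (auto simp: succ_def hist_step_def)
  next
    case (Op q op)
    with t dp have ord: "1 \<le> op_order op" "op_order op \<le> n" unfolding is_dpda_def trans_at_def by auto
    show ?thesis
    proof (cases op)
      case (Pop k)
      with Op t st ord show ?thesis by (intro pp[of q k]) (auto simp: succ_def hist_step_def)
    next
      case (Push k g)
      with Op t st ord show ?thesis by (intro ps[of q k g]) (auto simp: succ_def hist_step_def)
    qed
  qed
qed

definition stepok :: "nat \<Rightarrow> ('q, 'g, 'a) delta \<Rightarrow> ('q, 'g) config \<Rightarrow> ('q, 'g) config \<Rightarrow> bool" where
  "stepok n \<delta> c c' \<longleftrightarrow> is_dpda n \<delta> \<and> wfs n (snd c) \<and> wfs n (snd c') \<and> succ n \<delta> c c'"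

lemma stepok_cases:
  assumes "stepok n \<delta> c c'"
  obtains (rd) f where "trans_at \<delta> c = Some (Read f)" "snd c' = snd c" "\<And>x. hist_step n \<delta> c c' x = x"
  | (pp) q k where "trans_at \<delta> c = Some (Op q (Pop k))" "1 \<le> k" "k \<le> n" "pop_d (n - k) (snd c) = Some (snd c')"
       "\<And>x. hist_step n \<delta> c c' x = x"
  | (ps) q k g where "trans_at \<delta> c = Some (Op q (Push k g))" "1 \<le> k" "k \<le> n" "snd c' = push_d (n - k) g (snd c)"
       "\<And>x. hist_step n \<delta> c c' x = (if take (Suc (n - k)) x = take (Suc (n - k)) (toppath (snd c'))
             then x[n - k := x ! (n - k) - 1] else x)"
       "toppath (snd c') = (toppath (snd c))[n - k := toppath (snd c) ! (n - k) + 1]"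
proof -
  from assms have dp: "is_dpda n \<delta>" and st: "succ n \<delta> c c'" and w: "wfs n (snd c)" unfolding stepok_def by auto
  show ?thesis
  proof (rule step_cases[OF dp st])
    fix f assume "trans_at \<delta> c = Some (Read f)" "snd c' = snd c" "\<And>x. hist_step n \<delta> c c' x = x"
    then show ?thesis by (rule that(1))
  next
    fix q k assume "trans_at \<delta> c = Some (Op q (Pop k))" "1 \<le> k" "k \<le> n" "pop_d (n - k) (snd c) = Some (snd c')"
       "\<And>x. hist_step n \<delta> c c' x = x"
    then show ?thesis by (rule that(2))
  next
    fix q k g assume ps: "trans_at \<delta> c = Some (Op q (Push k g))" "1 \<le> k" "k \<le> n" "snd c' = push_d (n - k) g (snd c)"
       "\<And>x. hist_step n \<delta> c c' x = (if take (Suc (n - k)) x = take (Suc (n - k)) (toppath (snd c'))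
             then x[n - k := x ! (n - k) - 1] else x)"
    moreover have "toppath (snd c') = (toppath (snd c))[n - k := toppath (snd c) ! (n - k) + 1]"
      using ps top_push[OF w, of "n - k" g] by auto
    ultimately show ?thesis by (rule that(3))
  qed
qed

lemma stepok_toplen:
  assumes "stepok n \<delta> c c'"
  shows "length (toppath (snd c)) = n" "length (toppath (snd c')) = n"
    "vp (snd c) (toppath (snd c))" "vp (snd c') (toppath (snd c'))" "1 \<le> n"
  using assms top_vp unfolding stepok_def is_dpda_def by auto

lemma hs_len: "length (hist_step n \<delta> c c' x) = length x"
  unfolding hist_step_def by (auto split: option.splits trans.splits op.splits)

lemma hs_take:
  assumes "stepok n \<delta> c c'"
  shows "take m (hist_step n \<delta> c c' x) = hist_step n \<delta> c c' (take m x)"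
  using assms
proof (cases rule: stepok_cases)
  case rd then show ?thesis by simp
next
  case pp then show ?thesis by simp
next
  case (ps q k g)
  have lp: "length (toppath (snd c')) = n" using stepok_toplen[OF assms] by simp
  show ?thesis
  proof (cases "m \<le> n - k")
    case True
    have "length (take (Suc (n - k)) (take m x)) \<le> n - k" using True by simp
    moreover have "length (take (Suc (n - k)) (toppath (snd c'))) = Suc (n - k)" using lp ps by simp
    ultimately have "take (Suc (n - k)) (take m x) \<noteq> take (Suc (n - k)) (toppath (snd c'))"
      by (metis Suc_n_not_le_n)
    with True ps show ?thesis by simp
  next
    case False
    then have "take (Suc (n - k)) (take m x) = take (Suc (n - k)) x" by (simp add: min_def)
    with False ps show ?thesis by (simp add: take_update_swap)
  qed
qed

lemma hs_vp:
  assumes "stepok n \<delta> c c'" "vp (snd c') x"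
  shows "vp (snd c) (hist_step n \<delta> c c' x)"
  using assms(1)
proof (cases rule: stepok_cases)
  case rd then show ?thesis using assms by simp
next
  case (pp q k)
  with assms vp_pop[of n "snd c" "n - k" "snd c'" x] show ?thesis unfolding stepok_def by auto
next
  case (ps q k g)
  with assms vp_push[of n "snd c" "n - k" g x] show ?thesis unfolding stepok_def by auto
qed

lemma hs_top_push:
  assumes "stepok n \<delta> c c'" "trans_at \<delta> c = Some (Op q (Push k g))"
  shows "hist_step n \<delta> c c' (toppath (snd c')) = toppath (snd c)"
  using assms(1)
proof (cases rule: stepok_cases)
  case rd with assms show ?thesis by simp
next
  case pp with assms show ?thesis by simp
next
  case (ps q' k' g')
  with assms have kk: "k' = k" by simp
  have lp: "length (toppath (snd c)) = n" using stepok_toplen[OF assms(1)] by simp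
  with ps have "n - k' < n" by auto
  with ps lp show ?thesis by simp
qed


lemma stepok_wfs: "stepok n \<delta> c c' \<Longrightarrow> wfs n (snd c)" "stepok n \<delta> c c' \<Longrightarrow> wfs n (snd c')"
  unfolding stepok_def by auto

lemma push_notop:
  assumes so: "stepok n \<delta> c c'" and ps: "trans_at \<delta> c = Some (Op q (Push k g))"
    and ne: "hist_step n \<delta> c c' (take m y) \<noteq> take m (toppath (snd c))"
  shows "take m y \<noteq> take m (toppath (snd c'))"
proof
  assume "take m y = take m (toppath (snd c'))"
  then have "hist_step n \<delta> c c' (take m y) = take m (hist_step n \<delta> c c' (toppath (snd c')))"
    by (simp add: hs_take[OF so])
  also have "\<dots> = take m (toppath (snd c))" using hs_top_push[OF so ps] by simp
  finally show False using ne by simp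
qed

lemma step_sub:
  assumes so: "stepok n \<delta> c c'" and v: "vp (snd c') y" and E: "E < n"
    and ne: "hist_step n \<delta> c c' (take (Suc E) y) \<noteq> take (Suc E) (toppath (snd c))"
  shows "sub (snd c') (take (Suc E) y) = sub (snd c) (hist_step n \<delta> c c' (take (Suc E) y))"
  using so
proof (cases rule: stepok_cases)
  case rd then show ?thesis by simp
next
  case (pp q k)
  with ne have "\<not> (E < n - k \<and> take (Suc E) y = take (Suc E) (toppath (snd c)))" by simp
  from sub_pop[OF stepok_wfs(1)[OF so] _ pp(4) v this] pp show ?thesis by simp
next
  case (ps q k g)
  have ly: "length y = n" using wfs_len[OF stepok_wfs(2)[OF so] v] .
  have lp: "length (toppath (snd c')) = n" using stepok_toplen[OF so] by simp
  have nt: "take (Suc E) y \<noteq> take (Suc E) (toppath (snd c'))" using push_notop[OF so ps(1) ne] .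
  from ps v have v': "vp (push_d (n - k) g (snd c)) y" by simp
  have "sub (snd c') (take (Suc E) y) = sub (snd c) (if n - k \<le> E \<and> take (Suc (n - k)) (take (Suc E) y) = take (Suc (n - k)) (toppath (snd c'))
      then (take (Suc E) y)[n - k := take (Suc E) y ! (n - k) - 1] else take (Suc E) y)"
    using sub_push[OF stepok_wfs(1)[OF so] _ v'] nt ps by auto
  also have "(if n - k \<le> E \<and> take (Suc (n - k)) (take (Suc E) y) = take (Suc (n - k)) (toppath (snd c'))
      then (take (Suc E) y)[n - k := take (Suc E) y ! (n - k) - 1] else take (Suc E) y) =
      hist_step n \<delta> c c' (take (Suc E) y)"
  proof (cases "n - k \<le> E")
    case True then show ?thesis using ps by simp
  next
    case False
    then have "length (take (Suc (n - k)) (take (Suc E) y)) \<noteq> length (take (Suc (n - k)) (toppath (snd c')))"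
      using ly lp ps E by auto
    then have nc: "take (Suc (n - k)) (take (Suc E) y) \<noteq> take (Suc (n - k)) (toppath (snd c'))" by metis
    have "hist_step n \<delta> c c' (take (Suc E) y) = take (Suc E) y" using ps(5) nc by simp
    then show ?thesis using False by simp
  qed
  finally show ?thesis .
qed

lemma take_Suc_nth: "D < length x \<Longrightarrow> take (Suc D) x = take D x @ [x ! D]"
  by (simp add: take_Suc_conv_app_nth)

lemma tt: "m \<le> k \<Longrightarrow> take m (take k x) = take m x"
  by (simp add: min_def)

lemma step_GR:
  assumes so: "stepok n \<delta> c c'" and D: "D < n" and v0: "vp (snd c') y0"
    and ne: "hist_step n \<delta> c c' (take (Suc D) y0) \<noteq> take (Suc D) (toppath (snd c))"
    and v: "vp (snd c') y" and tk: "take D y = take D y0" and le: "y ! D \<le> y0 ! D"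
  shows "hist_step n \<delta> c c' y = take D (hist_step n \<delta> c c' (take (Suc D) y0)) @ drop D y"
proof -
  have tY: "take D (take (Suc D) y0) = take D y" using tk by (simp add: tt)
  have ly: "length y = n" using wfs_len[OF stepok_wfs(2)[OF so] v] .
  have ly0: "length y0 = n" using wfs_len[OF stepok_wfs(2)[OF so] v0] .
  have yid: "y = take D y @ drop D y" by simp
  show ?thesis
  using so
  proof (cases rule: stepok_cases)
    case rd then show ?thesis using tY by simp
  next
    case pp then show ?thesis using tY by simp
  next
    case (ps q k g)
    let ?p' = "toppath (snd c')"
    let ?Y = "take (Suc D) y0"
    have lp: "length ?p' = n" using stepok_toplen[OF so] by simp
    have nt: "?Y \<noteq> take (Suc D) ?p'" using push_notop[OF so ps(1) ne] .
    show ?thesis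
    proof (cases "n - k < D")
      case True
      have "take (Suc (n - k)) y = take (Suc (n - k)) (take D y)" using True by (simp add: tt)
      also have "\<dots> = take (Suc (n - k)) (take D y0)" using tk by simp
      also have "\<dots> = take (Suc (n - k)) ?Y" using True by (simp add: tt)
      finally have e1: "take (Suc (n - k)) y = take (Suc (n - k)) ?Y" .
      show ?thesis
      proof (cases "take (Suc (n - k)) y = take (Suc (n - k)) ?p'")
        case C: True
        have "?Y ! (n - k) = y0 ! (n - k)" using True by simp
        also have "\<dots> = take D y0 ! (n - k)" using True by simp
        also have "\<dots> = take D y ! (n - k)" using tk by simp
        also have "\<dots> = y ! (n - k)" using True by simp
        finally have yy: "?Y ! (n - k) = y ! (n - k)" .
        have "take D (?Y[n - k := ?Y ! (n - k) - 1]) = (take D y)[n - k := y ! (n - k) - 1]"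
          using tY yy by (simp add: take_update_swap)
        moreover have "(take D y)[n - k := y ! (n - k) - 1] @ drop D y = y[n - k := y ! (n - k) - 1]"
        proof -
          have "n - k < length (take D y)" using True ly D by simp
          then have "(take D y @ drop D y)[n - k := y ! (n - k) - 1] = (take D y)[n - k := y ! (n - k) - 1] @ drop D y"
            by (rule list_update_append1)
          then show ?thesis by simp
        qed
        ultimately show ?thesis using C e1 ps by simp
      next
        case C: False
        then show ?thesis using e1 ps tY by simp
      qed
    next
      case False
      have nC: "take (Suc (n - k)) y \<noteq> take (Suc (n - k)) ?p'"
      proof
        assume h: "take (Suc (n - k)) y = take (Suc (n - k)) ?p'"
        have "take (Suc D) y = take (Suc D) (take (Suc (n - k)) y)" using False by (simp add: tt)
        also have "\<dots> = take (Suc D) ?p'" using h False by (simp add: tt)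
        finally have "take D y @ [y ! D] = take D ?p' @ [?p' ! D]"
          using take_Suc_nth[of D y] take_Suc_nth[of D ?p'] ly lp D by simp
        then have a: "take D y = take D ?p'" "y ! D = ?p' ! D" by simp_all
        have "y0 ! D \<le> ?p' ! D" using top_max[OF stepok_wfs(2)[OF so] v0 D] a tk by simp
        then have "y0 ! D = ?p' ! D" using a le by simp
        then have "?Y = take (Suc D) ?p'" using a tk ly0 lp D take_Suc_nth[of D y0] take_Suc_nth[of D ?p'] by simp
        with nt show False by simp
      qed
      have nY: "take (Suc (n - k)) ?Y \<noteq> take (Suc (n - k)) ?p'"
      proof (cases "n - k = D")
        case True then show ?thesis using nt by simp
      next
        case F: False
        have "length (take (Suc (n - k)) ?Y) = Suc D" using False F ly0 D by simp
        moreover have "length (take (Suc (n - k)) ?p') = Suc (n - k)" using lp ps by simp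
        ultimately show ?thesis using F by (metis Suc_inject)
      qed
      show ?thesis using nC nY ps tY by simp
    qed
  qed
qed

lemma step_pair:
  assumes so: "stepok n \<delta> c c'" and D: "D < n" and vz: "vp (snd c') z0" and vy: "vp (snd c') y0"
    and tk: "take D z0 = take D y0" and ix: "z0 ! D = y0 ! D + 1"
    and ne: "hist_step n \<delta> c c' (take (Suc D) y0) \<noteq> take (Suc D) (toppath (snd c))"
  shows "take D (hist_step n \<delta> c c' z0) = take D (hist_step n \<delta> c c' y0) \<and>
         hist_step n \<delta> c c' z0 ! D = hist_step n \<delta> c c' y0 ! D + 1"
  using so
proof (cases rule: stepok_cases)
  case rd then show ?thesis using tk ix by simp
next
  case pp then show ?thesis using tk ix by simp
next
  case (ps q k g)
  let ?p' = "toppath (snd c')"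
  let ?p = "toppath (snd c)"
  have lz: "length z0 = n" using wfs_len[OF stepok_wfs(2)[OF so] vz] .
  have ly0: "length y0 = n" using wfs_len[OF stepok_wfs(2)[OF so] vy] .
  have lp: "length ?p' = n" "length ?p = n" using stepok_toplen[OF so] by simp_all
  have nt: "take (Suc D) y0 \<noteq> take (Suc D) ?p'" using push_notop[OF so ps(1) ne] .
  consider "D < n - k" | "n - k = D" | "n - k < D" by linarith
  then show ?thesis
  proof cases
    case 1
    then show ?thesis using ps tk ix by (auto simp: nth_list_update_neq)
  next
    case 2
    have nCy: "take (Suc (n - k)) y0 \<noteq> take (Suc (n - k)) ?p'" using nt 2 by simp
    have nCz: "take (Suc (n - k)) z0 \<noteq> take (Suc (n - k)) ?p'"
    proof
      assume h: "take (Suc (n - k)) z0 = take (Suc (n - k)) ?p'"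
      then have "take D z0 @ [z0 ! D] = take D ?p' @ [?p' ! D]"
        using take_Suc_nth[of D z0] take_Suc_nth[of D ?p'] lz lp D 2 by simp
      then have a: "take D z0 = take D ?p'" "z0 ! D = ?p' ! D" by simp_all
      have "take (Suc D) y0 = take D ?p' @ [?p' ! D - 1]" using a tk ix ly0 D take_Suc_nth[of D y0] by simp
      also have "\<dots> = take (Suc D) ?p"
        using ps(6) 2 lp D take_Suc_nth[of D ?p] by (simp add: take_update_cancel)
      finally have "take (Suc D) y0 = take (Suc D) ?p" .
      moreover have "hist_step n \<delta> c c' (take (Suc D) y0) = take (Suc D) y0" using ps nCy 2 by simp
      ultimately show False using ne by simp
    qed
    show ?thesis using ps nCy nCz tk ix by simp
  next
    case 3
    have "take (Suc (n - k)) z0 = take (Suc (n - k)) (take D z0)" using 3 by (simp add: tt)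
    also have "\<dots> = take (Suc (n - k)) y0" using 3 tk by (simp add: tt)
    finally have e: "take (Suc (n - k)) z0 = take (Suc (n - k)) y0" .
    have "z0 ! (n - k) = take D z0 ! (n - k)" using 3 by simp
    also have "\<dots> = y0 ! (n - k)" using 3 tk by simp
    finally have e2: "z0 ! (n - k) = y0 ! (n - k)" .
    show ?thesis using ps e e2 tk ix 3 by (auto simp: take_update_swap)
  qed
qed


fun hj :: "nat \<Rightarrow> ('q, 'g, 'a) delta \<Rightarrow> ('q, 'g) config list \<Rightarrow> nat list \<Rightarrow> nat list" where
  "hj n \<delta> (c # c' # cs) x = hist_step n \<delta> c c' (hj n \<delta> (c' # cs) x)"
| "hj n \<delta> _ x = x"

lemma hr_snoc: "hist_rev n \<delta> (ys @ [c', c]) x = hist_step n \<delta> c c' (hist_rev n \<delta> (ys @ [c']) x)"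
  by (induction ys arbitrary: x rule: induct_list012) auto

lemma hist0_hj: "hist0 n \<delta> R x = hj n \<delta> R x"
proof (induction n \<delta> R x rule: hj.induct)
  case (1 n \<delta> c c' cs x)
  then show ?case unfolding hist0_def by (simp add: hr_snoc)
next
  case ("2_1" n \<delta> x) then show ?case by (simp add: hist0_def)
next
  case ("2_2" n \<delta> v x) then show ?case by (simp add: hist0_def)
qed

lemma run_Cons:
  assumes "is_run n \<delta> (c # c' # cs)" "is_dpda n \<delta>"
  shows "is_run n \<delta> (c' # cs)" "stepok n \<delta> c c'"
proof -
  from assms have s: "succ n \<delta> c c'" unfolding is_run_def by force
  from assms show "is_run n \<delta> (c' # cs)" unfolding is_run_def by force
  from assms s show "stepok n \<delta> c c'" unfolding is_run_def stepok_def wf_config_def wfs_def by auto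
qed

lemma run_hd_wfs: "is_run n \<delta> Q \<Longrightarrow> wfs n (snd (hd Q))"
  unfolding is_run_def wf_config_def wfs_def by (cases Q) auto

lemma run_last_wfs: "is_run n \<delta> Q \<Longrightarrow> wfs n (snd (last Q))"
  unfolding is_run_def wf_config_def wfs_def by auto

lemma run_hj_vp: "is_dpda n \<delta> \<Longrightarrow> is_run n \<delta> Q \<Longrightarrow> vp (snd (last Q)) x \<Longrightarrow> vp (snd (hd Q)) (hj n \<delta> Q x)"
proof (induction n \<delta> Q x rule: hj.induct)
  case (1 n \<delta> c c' cs x)
  from run_Cons[OF 1(3) 1(2)] have r: "is_run n \<delta> (c' # cs)" "stepok n \<delta> c c'" .
  from 1(1)[OF 1(2) r(1)] 1(4) have "vp (snd c') (hj n \<delta> (c' # cs) x)" by simp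
  from hs_vp[OF r(2) this] show ?case by simp
qed (auto simp: is_run_def)

lemma run_hj_take: "is_dpda n \<delta> \<Longrightarrow> is_run n \<delta> Q \<Longrightarrow> take m (hj n \<delta> Q x) = hj n \<delta> Q (take m x)"
proof (induction n \<delta> Q x rule: hj.induct)
  case (1 n \<delta> c c' cs x)
  from run_Cons[OF 1(3) 1(2)] have r: "is_run n \<delta> (c' # cs)" "stepok n \<delta> c c'" .
  show ?case using hs_take[OF r(2)] 1(1)[OF 1(2) r(1)] by simp
qed auto

lemma run_hj_pre: "is_dpda n \<delta> \<Longrightarrow> is_run n \<delta> Q \<Longrightarrow> take m x = take m y \<Longrightarrow> take m (hj n \<delta> Q x) = take m (hj n \<delta> Q y)"
proof -
  assume a: "is_dpda n \<delta>" "is_run n \<delta> Q" "take m x = take m y"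
  have "take m (hj n \<delta> Q x) = hj n \<delta> Q (take m x)" by (rule run_hj_take[OF a(1,2)])
  also have "\<dots> = hj n \<delta> Q (take m y)" using a(3) by simp
  also have "\<dots> = take m (hj n \<delta> Q y)" by (rule run_hj_take[OF a(1,2), symmetric])
  finally show ?thesis .
qed

lemma hist_stk_eq:
  assumes dp: "is_dpda n \<delta>" and r: "is_run n \<delta> Q" and x: "vp (snd (last Q)) x"
  shows "hist_stk n \<delta> Q l (take (n - l) x) = take (n - l) (hj n \<delta> Q x)"
  unfolding hist_stk_def
proof (rule the_equality)
  show "(\<exists>xa\<in>positions (snd (hd Q)). take (n - l) xa = take (n - l) (hj n \<delta> Q x)) \<and>
    (\<forall>xa\<in>positions (snd (last Q)). take (n - l) xa = take (n - l) x \<longrightarrow>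
       take (n - l) (hist0 n \<delta> Q xa) = take (n - l) (hj n \<delta> Q x))"
  proof
    show "\<exists>xa\<in>positions (snd (hd Q)). take (n - l) xa = take (n - l) (hj n \<delta> Q x)"
    proof
      show "hj n \<delta> Q x \<in> positions (snd (hd Q))" using run_hj_vp[OF dp r x] by (simp add: pos_vp)
    qed simp
    show "\<forall>xa\<in>positions (snd (last Q)). take (n - l) xa = take (n - l) x \<longrightarrow>
       take (n - l) (hist0 n \<delta> Q xa) = take (n - l) (hj n \<delta> Q x)"
      using run_hj_pre[OF dp r] unfolding hist0_hj by blast
  qed
next
  fix P' assume "(\<exists>xa\<in>positions (snd (hd Q)). take (n - l) xa = P') \<and>
    (\<forall>xa\<in>positions (snd (last Q)). take (n - l) xa = take (n - l) x \<longrightarrow> take (n - l) (hist0 n \<delta> Q xa) = P')"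
  then have "\<forall>xa\<in>positions (snd (last Q)). take (n - l) xa = take (n - l) x \<longrightarrow> take (n - l) (hist0 n \<delta> Q xa) = P'" by blast
  moreover have "x \<in> positions (snd (last Q))" using x by (simp add: pos_vp)
  ultimately show "P' = take (n - l) (hj n \<delta> Q x)" unfolding hist0_hj by auto
qed

lemma run_drop: "is_run n \<delta> Q \<Longrightarrow> i < length Q \<Longrightarrow> is_run n \<delta> (drop i Q)"
  unfolding is_run_def by (auto dest: in_set_dropD)

lemma upper_eq:
  assumes dp: "is_dpda n \<delta>" and r: "is_run n \<delta> Q"
  shows "upper n \<delta> l Q \<longleftrightarrow> take (n - l) (hj n \<delta> Q (toppath (snd (last Q)))) = take (n - l) (toppath (snd (hd Q)))"
  unfolding upper_def top_id_def
  using hist_stk_eq[OF dp r top_vp[OF run_last_wfs[OF r], THEN conjunct1]] by simp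

lemma ret_eq:
  assumes dp: "is_dpda n \<delta>" and r: "is_run n \<delta> Q" and k: "1 \<le> k" "k \<le> n"
  shows "is_return n \<delta> k Q \<longleftrightarrow>
    2 \<le> toppath (snd (hd Q)) ! (n - k) \<and>
    take (Suc (n - k)) (hj n \<delta> Q (toppath (snd (last Q)))) =
       take (n - k) (toppath (snd (hd Q))) @ [toppath (snd (hd Q)) ! (n - k) - 1] \<and>
    (\<forall>i < length Q - 1. take (Suc (n - k)) (hj n \<delta> (drop i Q) (toppath (snd (last Q)))) \<noteq>
        take (Suc (n - k)) (toppath (snd (Q ! i))))"
proof -
  have nk: "n - (k - 1) = Suc (n - k)" using k by simp
  have w0: "wfs n (snd (hd Q))" using run_hd_wfs[OF r] .
  have D: "n - k < n" using k by simp
  have pop: "(\<exists>s'. apply_op n (Pop k) (snd (hd Q)) = Some s' \<and> X = top_id n (k - 1) s') \<longleftrightarrow>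
     2 \<le> toppath (snd (hd Q)) ! (n - k) \<and> X = take (n - k) (toppath (snd (hd Q))) @ [toppath (snd (hd Q)) ! (n - k) - 1]" for X
  proof
    assume "\<exists>s'. apply_op n (Pop k) (snd (hd Q)) = Some s' \<and> X = top_id n (k - 1) s'"
    then obtain s' where s': "pop_d (n - k) (snd (hd Q)) = Some s'" "X = top_id n (k - 1) s'" by auto
    then have s'': "X = take (Suc (n - k)) (toppath s')" unfolding top_id_def using nk k by simp
    then show "2 \<le> toppath (snd (hd Q)) ! (n - k) \<and> X = take (n - k) (toppath (snd (hd Q))) @ [toppath (snd (hd Q)) ! (n - k) - 1]"
      using pop_some[OF w0 D] top_pop[OF w0 D s'(1)] s'' s'(1) by auto
  next
    assume h: "2 \<le> toppath (snd (hd Q)) ! (n - k) \<and> X = take (n - k) (toppath (snd (hd Q))) @ [toppath (snd (hd Q)) ! (n - k) - 1]"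
    then obtain s' where s': "pop_d (n - k) (snd (hd Q)) = Some s'" using pop_some[OF w0 D] by auto
    then show "\<exists>s'. apply_op n (Pop k) (snd (hd Q)) = Some s' \<and> X = top_id n (k - 1) s'"
      using h top_pop[OF w0 D s'] nk unfolding top_id_def by auto
  qed
  have hs: "hist_stk n \<delta> Q (k - 1) (top_id n (k - 1) (snd (last Q))) = take (Suc (n - k)) (hj n \<delta> Q (toppath (snd (last Q))))"
  proof -
    have "hist_stk n \<delta> Q (k - 1) (take (n - (k - 1)) (toppath (snd (last Q)))) =
       take (n - (k - 1)) (hj n \<delta> Q (toppath (snd (last Q))))"
      by (rule hist_stk_eq[OF dp r top_vp[OF run_last_wfs[OF r], THEN conjunct1]])
    then show ?thesis unfolding top_id_def nk .
  qed
  have up: "upper n \<delta> (k - 1) (drop i Q) \<longleftrightarrow> take (Suc (n - k)) (hj n \<delta> (drop i Q) (toppath (snd (last Q)))) =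
        take (Suc (n - k)) (toppath (snd (Q ! i)))" if "i < length Q - 1" for i
  proof -
    have "i < length Q" using that by simp
    then have "is_run n \<delta> (drop i Q)" "hd (drop i Q) = Q ! i" "last (drop i Q) = last Q"
      using run_drop[OF r] by (auto simp: hd_drop_conv_nth)
    then show ?thesis using upper_eq[OF dp, of "drop i Q" "k - 1"] unfolding nk by simp
  qed
  have "is_return n \<delta> k Q \<longleftrightarrow> (\<exists>s'. apply_op n (Pop k) (snd (hd Q)) = Some s' \<and>
        take (Suc (n - k)) (hj n \<delta> Q (toppath (snd (last Q)))) = top_id n (k - 1) s') \<and>
     (\<forall>i < length Q - 1. \<not> upper n \<delta> (k - 1) (drop i Q))"
    unfolding is_return_def hs by simp
  also have "\<dots> \<longleftrightarrow> (2 \<le> toppath (snd (hd Q)) ! (n - k) \<and>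
    take (Suc (n - k)) (hj n \<delta> Q (toppath (snd (last Q)))) =
       take (n - k) (toppath (snd (hd Q))) @ [toppath (snd (hd Q)) ! (n - k) - 1]) \<and>
     (\<forall>i < length Q - 1. \<not> upper n \<delta> (k - 1) (drop i Q))"
    using pop[of "take (Suc (n - k)) (hj n \<delta> Q (toppath (snd (last Q))))"] by metis
  also have "\<dots> \<longleftrightarrow> (2 \<le> toppath (snd (hd Q)) ! (n - k) \<and>
    take (Suc (n - k)) (hj n \<delta> Q (toppath (snd (last Q)))) =
       take (n - k) (toppath (snd (hd Q))) @ [toppath (snd (hd Q)) ! (n - k) - 1]) \<and>
    (\<forall>i < length Q - 1. take (Suc (n - k)) (hj n \<delta> (drop i Q) (toppath (snd (last Q)))) \<noteq>
        take (Suc (n - k)) (toppath (snd (Q ! i))))" using up by auto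
  finally show ?thesis by simp
qed


lemma take_eq_nth: "m \<le> length a \<Longrightarrow> m \<le> length b \<Longrightarrow> (take m a = take m b) = (\<forall>i<m. a ! i = b ! i)"
  by (auto simp: list_eq_iff_nth_eq)

lemma take_snoc_nth: "Suc d \<le> length a \<Longrightarrow> d \<le> length b \<Longrightarrow>
   (take (Suc d) a = take d b @ [v]) = ((\<forall>i<d. a ! i = b ! i) \<and> a ! d = v)"
  by (auto simp: list_eq_iff_nth_eq nth_append take_Suc_nth less_Suc_eq)

locale rn =
  fixes n :: nat and \<delta> :: "('q, 'g, 'a) delta" and R :: "('q, 'g) config list"
  assumes dp: "is_dpda n \<delta>" and run: "is_run n \<delta> R"
begin

abbreviation N where "N \<equiv> length R - 1"
definition cf where "cf i = snd (R ! i)"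
definition tp where "tp i = toppath (cf i)"
definition seg where "seg a b = take (Suc b - a) (drop a R)"
definition H where "H a b x = hj n \<delta> (seg a b) x"

lemma Rne: "R \<noteq> []" using run unfolding is_run_def by simp
lemma lenR: "length R = Suc N" using Rne by simp
lemma n1: "1 \<le> n" using dp unfolding is_dpda_def by simp

lemma wfc: "i \<le> N \<Longrightarrow> wfs n (cf i)"
  using run lenR unfolding is_run_def cf_def wf_config_def wfs_def
  by (metis le_imp_less_Suc nth_mem)

lemma stp: "i < N \<Longrightarrow> stepok n \<delta> (R ! i) (R ! Suc i)"
  using run dp lenR wfc[of i] wfc[of "Suc i"] unfolding is_run_def stepok_def cf_def by auto

lemma tp_vp: "i \<le> N \<Longrightarrow> vp (cf i) (tp i)" "i \<le> N \<Longrightarrow> length (tp i) = n"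
  using top_vp[OF wfc] unfolding tp_def by auto

lemma vp_len: "i \<le> N \<Longrightarrow> vp (cf i) x \<Longrightarrow> length x = n"
  using wfs_len[OF wfc] by blast

lemma drop_Cons': "a \<le> N \<Longrightarrow> drop a R = R ! a # drop (Suc a) R"
  using lenR by (simp add: Cons_nth_drop_Suc)

lemma seg_Cons: "a < b \<Longrightarrow> b \<le> N \<Longrightarrow> seg a b = R ! a # seg (Suc a) b"
proof -
  assume ab: "a < b" "b \<le> N"
  then have e: "Suc b - a = Suc (b - a)" "Suc b - Suc a = b - a" by auto
  show ?thesis unfolding seg_def e drop_Cons'[of a] using ab drop_Cons'[of a] by simp
qed

lemma seg_single: "a \<le> N \<Longrightarrow> seg a a = [R ! a]"
  unfolding seg_def using drop_Cons'[of a] by simp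

lemma seg_len: "a \<le> b \<Longrightarrow> b \<le> N \<Longrightarrow> length (seg a b) = Suc b - a"
  unfolding seg_def using lenR by simp

lemma seg_nth: "a \<le> b \<Longrightarrow> b \<le> N \<Longrightarrow> i \<le> b - a \<Longrightarrow> seg a b ! i = R ! (a + i)"
  unfolding seg_def using lenR by simp

lemma seg_ne: "a \<le> b \<Longrightarrow> b \<le> N \<Longrightarrow> seg a b \<noteq> []"
  using seg_len by fastforce

lemma seg_hd: "a \<le> b \<Longrightarrow> b \<le> N \<Longrightarrow> hd (seg a b) = R ! a"
  using seg_nth[of a b 0] seg_ne[of a b] by (simp add: hd_conv_nth)

lemma seg_last: "a \<le> b \<Longrightarrow> b \<le> N \<Longrightarrow> last (seg a b) = R ! b"
  using seg_nth[of a b "b - a"] seg_len[of a b] seg_ne[of a b] by (simp add: last_conv_nth)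

lemma seg_drop: "a \<le> b \<Longrightarrow> b \<le> N \<Longrightarrow> i \<le> b - a \<Longrightarrow> drop i (seg a b) = seg (a + i) b"
proof -
  assume "a \<le> b" "b \<le> N" "i \<le> b - a"
  then have e: "Suc b - a - i = Suc b - (a + i)" by auto
  show ?thesis unfolding seg_def drop_take drop_drop e by (simp add: add.commute)
qed

lemma seg_run: "a \<le> b \<Longrightarrow> b \<le> N \<Longrightarrow> is_run n \<delta> (seg a b)"
proof -
  assume ab: "a \<le> b" "b \<le> N"
  have "seg a b \<noteq> []" using seg_ne[OF ab] .
  moreover have "\<forall>c\<in>set (seg a b). wf_config n c"
    using run unfolding is_run_def seg_def by (auto dest: in_set_takeD in_set_dropD)
  moreover have "\<forall>i. Suc i < length (seg a b) \<longrightarrow> succ n \<delta> (seg a b ! i) (seg a b ! Suc i)"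
  proof (intro allI impI)
    fix i assume "Suc i < length (seg a b)"
    then have "Suc i \<le> b - a" using seg_len[OF ab] by simp
    then show "succ n \<delta> (seg a b ! i) (seg a b ! Suc i)"
      using seg_nth[OF ab, of i] seg_nth[OF ab, of "Suc i"] stp[of "a + i"] ab
      unfolding stepok_def by auto
  qed
  ultimately show ?thesis unfolding is_run_def by blast
qed

lemma H_same: "a \<le> N \<Longrightarrow> H a a x = x"
  unfolding H_def using seg_single by simp

lemma H_step: "a < b \<Longrightarrow> b \<le> N \<Longrightarrow> H a b x = hist_step n \<delta> (R ! a) (R ! Suc a) (H (Suc a) b x)"
proof -
  assume ab: "a < b" "b \<le> N"
  show ?thesis
  proof (cases "Suc a = b")
    case True
    then show ?thesis unfolding H_def using seg_Cons[OF ab] seg_single[of b] ab by simp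
  next
    case False
    then have "seg (Suc a) b = R ! Suc a # seg (Suc (Suc a)) b" using seg_Cons ab by simp
    then show ?thesis unfolding H_def using seg_Cons[OF ab] by simp
  qed
qed

lemma H_comp: "a \<le> j \<Longrightarrow> j \<le> b \<Longrightarrow> b \<le> N \<Longrightarrow> H a b x = H a j (H j b x)"
proof (induction a rule: inc_induct)
  case base then show ?case using H_same by simp
next
  case (step a)
  then show ?case using H_step[of a b] H_step[of a j] by simp
qed

lemma H_vp: "a \<le> b \<Longrightarrow> b \<le> N \<Longrightarrow> vp (cf b) x \<Longrightarrow> vp (cf a) (H a b x)"
  unfolding H_def cf_def using run_hj_vp[OF dp seg_run] seg_hd seg_last by metis

lemma H_take: "a \<le> b \<Longrightarrow> b \<le> N \<Longrightarrow> take m (H a b x) = H a b (take m x)"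
  unfolding H_def using run_hj_take[OF dp seg_run] by metis

lemma H_pre: "a \<le> b \<Longrightarrow> b \<le> N \<Longrightarrow> take m x = take m y \<Longrightarrow> take m (H a b x) = take m (H a b y)"
  using H_take by metis

definition RET where "RET r a b \<longleftrightarrow> 2 \<le> tp a ! (n - r) \<and>
   take (Suc (n - r)) (H a b (tp b)) = take (n - r) (tp a) @ [tp a ! (n - r) - 1] \<and>
   (\<forall>i. a \<le> i \<longrightarrow> i < b \<longrightarrow> take (Suc (n - r)) (H i b (tp b)) \<noteq> take (Suc (n - r)) (tp i))"

lemma retS: "a \<le> b \<Longrightarrow> b \<le> N \<Longrightarrow> 1 \<le> r \<Longrightarrow> r \<le> n \<Longrightarrow> is_return n \<delta> r (seg a b) \<longleftrightarrow> RET r a b"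
proof -
  assume ab: "a \<le> b" "b \<le> N" and r: "1 \<le> r" "r \<le> n"
  have e1: "hj n \<delta> (seg a b) (toppath (snd (last (seg a b)))) = H a b (tp b)"
    unfolding H_def tp_def cf_def using seg_last[OF ab] by simp
  have e2: "(\<forall>i < length (seg a b) - 1. take (Suc (n - r)) (hj n \<delta> (drop i (seg a b)) (toppath (snd (last (seg a b))))) \<noteq>
        take (Suc (n - r)) (toppath (snd (seg a b ! i)))) \<longleftrightarrow>
     (\<forall>i. a \<le> i \<longrightarrow> i < b \<longrightarrow> take (Suc (n - r)) (H i b (tp b)) \<noteq> take (Suc (n - r)) (tp i))"
  proof
    assume h: "\<forall>i < length (seg a b) - 1. take (Suc (n - r)) (hj n \<delta> (drop i (seg a b)) (toppath (snd (last (seg a b))))) \<noteq>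
        take (Suc (n - r)) (toppath (snd (seg a b ! i)))"
    show "\<forall>i. a \<le> i \<longrightarrow> i < b \<longrightarrow> take (Suc (n - r)) (H i b (tp b)) \<noteq> take (Suc (n - r)) (tp i)"
    proof (intro allI impI)
      fix i assume i: "a \<le> i" "i < b"
      with h[rule_format, of "i - a"] seg_len[OF ab] seg_drop[OF ab, of "i - a"] seg_nth[OF ab, of "i - a"] seg_last[OF ab]
      show "take (Suc (n - r)) (H i b (tp b)) \<noteq> take (Suc (n - r)) (tp i)"
        unfolding H_def tp_def cf_def by simp
    qed
  next
    assume h: "\<forall>i. a \<le> i \<longrightarrow> i < b \<longrightarrow> take (Suc (n - r)) (H i b (tp b)) \<noteq> take (Suc (n - r)) (tp i)"
    show "\<forall>i < length (seg a b) - 1. take (Suc (n - r)) (hj n \<delta> (drop i (seg a b)) (toppath (snd (last (seg a b))))) \<noteq>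
        take (Suc (n - r)) (toppath (snd (seg a b ! i)))"
    proof (intro allI impI)
      fix i assume i: "i < length (seg a b) - 1"
      with h[rule_format, of "a + i"] seg_len[OF ab] seg_drop[OF ab, of i] seg_nth[OF ab, of i] seg_last[OF ab]
      show "take (Suc (n - r)) (hj n \<delta> (drop i (seg a b)) (toppath (snd (last (seg a b))))) \<noteq>
        take (Suc (n - r)) (toppath (snd (seg a b ! i)))"
        unfolding H_def tp_def cf_def by simp
    qed
  qed
  show ?thesis
    unfolding ret_eq[OF dp seg_run[OF ab] r] RET_def e1 e2
    using seg_hd[OF ab] unfolding tp_def cf_def by simp
qed

end




lemma step_sub_push:
  assumes so: "stepok n \<delta> c c'" and ps: "trans_at \<delta> c = Some (Op q (Push k g))"
    and v: "vp (snd c') y" and E: "E < n"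
    and nt: "take (Suc E) y \<noteq> take (Suc E) (toppath (snd c'))"
  shows "sub (snd c') (take (Suc E) y) = sub (snd c) (hist_step n \<delta> c c' (take (Suc E) y))"
  using so
proof (cases rule: stepok_cases)
  case rd then show ?thesis using ps by simp
next
  case pp then show ?thesis using ps by simp
next
  case (ps q k g)
  have ly: "length y = n" using wfs_len[OF stepok_wfs(2)[OF so] v] .
  have lp: "length (toppath (snd c')) = n" using stepok_toplen[OF so] by simp
  from ps v have v': "vp (push_d (n - k) g (snd c)) y" by simp
  have "sub (snd c') (take (Suc E) y) = sub (snd c) (if n - k \<le> E \<and> take (Suc (n - k)) (take (Suc E) y) = take (Suc (n - k)) (toppath (snd c'))
      then (take (Suc E) y)[n - k := take (Suc E) y ! (n - k) - 1] else take (Suc E) y)"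
    using sub_push[OF stepok_wfs(1)[OF so] _ v'] nt ps by auto
  also have "(if n - k \<le> E \<and> take (Suc (n - k)) (take (Suc E) y) = take (Suc (n - k)) (toppath (snd c'))
      then (take (Suc E) y)[n - k := take (Suc E) y ! (n - k) - 1] else take (Suc E) y) =
      hist_step n \<delta> c c' (take (Suc E) y)"
  proof (cases "n - k \<le> E")
    case True then show ?thesis using ps by simp
  next
    case False
    then have "length (take (Suc (n - k)) (take (Suc E) y)) \<noteq> length (take (Suc (n - k)) (toppath (snd c')))"
      using ly lp ps E by auto
    then have nc: "take (Suc (n - k)) (take (Suc E) y) \<noteq> take (Suc (n - k)) (toppath (snd c'))" by metis
    have "hist_step n \<delta> c c' (take (Suc E) y) = take (Suc E) y" using ps(5) nc by simp
    then show ?thesis using False by simp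
  qed
  finally show ?thesis .
qed

lemma step_freeze:
  assumes so: "stepok n \<delta> c c'" and v: "vp (snd c') y" and E: "E < n"
    and nt: "take (Suc E) y \<noteq> take (Suc E) (toppath (snd c'))"
    and ht: "hist_step n \<delta> c c' (take (Suc E) y) = take (Suc E) (toppath (snd c))"
  shows "take (Suc E) y = take (Suc E) (toppath (snd c)) \<and> sub (snd c') (take (Suc E) y) = sub (snd c) (take (Suc E) y)"
  using so
proof (cases rule: stepok_cases)
  case rd then show ?thesis using nt ht by simp
next
  case (pp q k)
  have Y: "take (Suc E) y = take (Suc E) (toppath (snd c))" using ht pp by simp
  have "\<not> (E < n - k \<and> take (Suc E) y = take (Suc E) (toppath (snd c)))"
  proof
    assume h: "E < n - k \<and> take (Suc E) y = take (Suc E) (toppath (snd c))"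
    have "take (Suc (n - k)) (toppath (snd c')) = take (n - k) (toppath (snd c)) @ [toppath (snd c) ! (n - k) - 1]"
      using top_pop[OF stepok_wfs(1)[OF so] _ pp(4)] pp by simp
    moreover have "Suc E \<le> length (toppath (snd c))" using stepok_toplen[OF so] E by simp
    ultimately have "take (Suc E) (take (Suc (n - k)) (toppath (snd c'))) = take (Suc E) (take (n - k) (toppath (snd c)))"
      using h by (simp add: min_def)
    then have "take (Suc E) (toppath (snd c')) = take (Suc E) (toppath (snd c))" using h by (simp add: tt)
    with h nt show False by simp
  qed
  from sub_pop[OF stepok_wfs(1)[OF so] _ pp(4) v this] pp Y show ?thesis by simp
next
  case (ps q k g)
  let ?p' = "toppath (snd c')" and ?p = "toppath (snd c)"
  have ly: "length y = n" using wfs_len[OF stepok_wfs(2)[OF so] v] .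
  have lp: "length ?p' = n" "length ?p = n" using stepok_toplen[OF so] by simp_all
  have nC: "\<not> take (Suc (n - k)) (take (Suc E) y) = take (Suc (n - k)) ?p'"
  proof
    assume C: "take (Suc (n - k)) (take (Suc E) y) = take (Suc (n - k)) ?p'"
    have DE: "n - k \<le> E"
    proof (rule ccontr)
      assume "\<not> n - k \<le> E"
      then have "length (take (Suc (n - k)) (take (Suc E) y)) \<noteq> length (take (Suc (n - k)) ?p')"
        using ly lp ps E by auto
      with C show False by simp
    qed
    have i1: "take (Suc E) y ! (n - k) = ?p' ! (n - k)"
      using C DE ly lp ps by (metis le_imp_less_Suc lessI nth_take)
    have "(take (Suc E) y)[n - k := take (Suc E) y ! (n - k) - 1] = take (Suc E) ?p"
      using ht ps C by simp
    also have "?p = ?p'[n - k := ?p' ! (n - k) - 1]" using ps(6) lp ps by (simp add: list_update_overwrite)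
    finally have "(take (Suc E) y)[n - k := ?p' ! (n - k) - 1] = (take (Suc E) ?p')[n - k := ?p' ! (n - k) - 1]"
      using i1 by (simp add: take_update_swap)
    then have "take (Suc E) y = take (Suc E) ?p'"
      using i1 DE ly lp E by (simp add: list_eq_iff_nth_eq nth_list_update split: if_splits) (metis (no_types) nth_take)
    with nt show False by simp
  qed
  have Y: "take (Suc E) y = take (Suc E) ?p" using ht ps nC by simp
  have "sub (snd c') (take (Suc E) y) = sub (snd c) (hist_step n \<delta> c c' (take (Suc E) y))"
    by (rule step_sub_push[OF so ps(1) v E nt])
  then show ?thesis using Y ht by simp
qed


context rn begin

lemma cfR: "snd (R ! i) = cf i" "toppath (snd (R ! i)) = tp i" unfolding cf_def tp_def by simp_all

lemma W_step: "a < b \<Longrightarrow> b \<le> N \<Longrightarrow>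
  take m (H a b x) = hist_step n \<delta> (R ! a) (R ! Suc a) (take m (H (Suc a) b x))"
proof -
  assume ab: "a < b" "b \<le> N"
  then have "a < N" by simp
  then show ?thesis using H_step[OF ab, of x] hs_take[OF stp[of a]] by simp
qed

lemma GR:
  assumes ab: "a \<le> b" "b \<le> N" and D: "D < n" and x0: "vp (cf b) x0"
  shows "(\<forall>i. a \<le> i \<longrightarrow> i < b \<longrightarrow> take (Suc D) (H i b x0) \<noteq> take (Suc D) (tp i)) \<longrightarrow>
    (\<forall>y. vp (cf b) y \<longrightarrow> take D y = take D x0 \<longrightarrow> y ! D \<le> x0 ! D \<longrightarrow> H a b y = take D (H a b x0) @ drop D y) \<and>
    sub (cf a) (take (Suc D) (H a b x0)) = sub (cf b) (take (Suc D) x0)"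
  using ab(1)
proof (induction a rule: inc_induct)
  case base
  have "\<forall>y. vp (cf b) y \<longrightarrow> take D y = take D x0 \<longrightarrow> y ! D \<le> x0 ! D \<longrightarrow> y = take D x0 @ drop D y"
  proof (intro allI impI)
    fix y assume "take D y = take D x0"
    then show "y = take D x0 @ drop D y" by (metis append_take_drop_id)
  qed
  then show ?case using H_same[OF ab(2)] by simp
next
  case (step a)
  show ?case
  proof
    assume nt: "\<forall>i. a \<le> i \<longrightarrow> i < b \<longrightarrow> take (Suc D) (H i b x0) \<noteq> take (Suc D) (tp i)"
    then have nt': "\<forall>i. Suc a \<le> i \<longrightarrow> i < b \<longrightarrow> take (Suc D) (H i b x0) \<noteq> take (Suc D) (tp i)" by auto
    from step.IH nt' have IH1: "\<And>y. vp (cf b) y \<Longrightarrow> take D y = take D x0 \<Longrightarrow> y ! D \<le> x0 ! D \<Longrightarrow>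
        H (Suc a) b y = take D (H (Suc a) b x0) @ drop D y"
      and IH2: "sub (cf (Suc a)) (take (Suc D) (H (Suc a) b x0)) = sub (cf b) (take (Suc D) x0)" by auto
    have aN: "a < N" "Suc a \<le> N" using step.hyps ab by auto
    have so: "stepok n \<delta> (R ! a) (R ! Suc a)" using stp[OF aN(1)] .
    let ?y0 = "H (Suc a) b x0"
    have vy0: "vp (cf (Suc a)) ?y0" using H_vp[of "Suc a" b x0] step.hyps ab x0 by simp
    have ly0: "length ?y0 = n" using vp_len[OF aN(2) vy0] .
    have lx0: "length x0 = n" using vp_len[OF ab(2) x0] .
    have Wd: "take (Suc D) (H a b x0) = hist_step n \<delta> (R ! a) (R ! Suc a) (take (Suc D) ?y0)"
      using W_step[of a b "Suc D" x0] step.hyps ab by simp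
    have ne: "hist_step n \<delta> (R ! a) (R ! Suc a) (take (Suc D) ?y0) \<noteq> take (Suc D) (toppath (snd (R ! a)))"
      using nt[rule_format, of a] step.hyps Wd cfR by simp
    have y0e: "?y0 = take D ?y0 @ drop D x0" using IH1[OF x0] by simp
    have "?y0 ! D = (take D ?y0 @ drop D x0) ! D" by (rule arg_cong[where f="\<lambda>l. l ! D", OF y0e])
    also have "\<dots> = x0 ! D" using ly0 lx0 D by (simp add: nth_append)
    finally have y0D: "?y0 ! D = x0 ! D" .
    show "(\<forall>y. vp (cf b) y \<longrightarrow> take D y = take D x0 \<longrightarrow> y ! D \<le> x0 ! D \<longrightarrow> H a b y = take D (H a b x0) @ drop D y) \<and>
      sub (cf a) (take (Suc D) (H a b x0)) = sub (cf b) (take (Suc D) x0)"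
    proof
      show "\<forall>y. vp (cf b) y \<longrightarrow> take D y = take D x0 \<longrightarrow> y ! D \<le> x0 ! D \<longrightarrow> H a b y = take D (H a b x0) @ drop D y"
      proof (intro allI impI)
        fix y assume vy: "vp (cf b) y" and tk: "take D y = take D x0" and le: "y ! D \<le> x0 ! D"
        let ?y' = "H (Suc a) b y"
        have y'e: "?y' = take D ?y0 @ drop D y" using IH1[OF vy tk le] .
        have ly: "length y = n" using vp_len[OF ab(2) vy] .
        have vy': "vp (cf (Suc a)) ?y'" using H_vp[of "Suc a" b y] step.hyps ab vy by simp
        have ltk: "length (take D ?y0) = D" using ly0 D by simp
        have tk': "take D ?y' = take D ?y0" using y'e ltk by simp
        have dr: "drop D ?y' = drop D y" using y'e ltk by simp
        have i': "?y' ! D = y ! D" using y'e ltk ly D by (simp add: nth_append)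
        have vy0': "vp (snd (R ! Suc a)) ?y0" using vy0 by (simp add: cf_def)
        have vy'': "vp (snd (R ! Suc a)) ?y'" using vy' by (simp add: cf_def)
        have le': "?y' ! D \<le> ?y0 ! D" using i' le y0D by simp
        have "hist_step n \<delta> (R ! a) (R ! Suc a) ?y' = take D (hist_step n \<delta> (R ! a) (R ! Suc a) (take (Suc D) ?y0)) @ drop D ?y'"
          by (rule step_GR[OF so D vy0' ne vy'' tk' le'])
        moreover have "take D (H a b x0) = take D (take (Suc D) (H a b x0))" by (simp add: tt)
        ultimately show "H a b y = take D (H a b x0) @ drop D y"
          using H_step[of a b y] step.hyps ab Wd dr by simp
      qed
    next
      have "sub (cf (Suc a)) (take (Suc D) ?y0) = sub (cf a) (hist_step n \<delta> (R ! a) (R ! Suc a) (take (Suc D) ?y0))"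
        using step_sub[OF so _ D ne] vy0 by (simp add: cf_def)
      then show "sub (cf a) (take (Suc D) (H a b x0)) = sub (cf b) (take (Suc D) x0)" using Wd IH2 by simp
    qed
  qed
qed

lemma PAIR:
  assumes ab: "a \<le> b" "b \<le> N" and D: "D < n" and z0: "vp (cf b) z0" and y0: "vp (cf b) y0"
    and tk: "take D z0 = take D y0" and ix: "z0 ! D = y0 ! D + 1"
  shows "(\<forall>i. a \<le> i \<longrightarrow> i < b \<longrightarrow> take (Suc D) (H i b y0) \<noteq> take (Suc D) (tp i)) \<longrightarrow>
    take D (H a b z0) = take D (H a b y0) \<and> H a b z0 ! D = H a b y0 ! D + 1"
  using ab(1)
proof (induction a rule: inc_induct)
  case base
  show ?case using H_same[OF ab(2)] tk ix by simp
next
  case (step a)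
  show ?case
  proof
    assume nt: "\<forall>i. a \<le> i \<longrightarrow> i < b \<longrightarrow> take (Suc D) (H i b y0) \<noteq> take (Suc D) (tp i)"
    then have "\<forall>i. Suc a \<le> i \<longrightarrow> i < b \<longrightarrow> take (Suc D) (H i b y0) \<noteq> take (Suc D) (tp i)" by auto
    with step.IH have IH: "take D (H (Suc a) b z0) = take D (H (Suc a) b y0) \<and> H (Suc a) b z0 ! D = H (Suc a) b y0 ! D + 1" by auto
    have aN: "a < N" "Suc a \<le> N" using step.hyps ab by auto
    have so: "stepok n \<delta> (R ! a) (R ! Suc a)" using stp[OF aN(1)] .
    have vz: "vp (cf (Suc a)) (H (Suc a) b z0)" using H_vp[of "Suc a" b z0] step.hyps ab z0 by simp
    have vy: "vp (cf (Suc a)) (H (Suc a) b y0)" using H_vp[of "Suc a" b y0] step.hyps ab y0 by simp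
    have Wd: "take (Suc D) (H a b y0) = hist_step n \<delta> (R ! a) (R ! Suc a) (take (Suc D) (H (Suc a) b y0))"
      using W_step[of a b "Suc D" y0] step.hyps ab by simp
    have ne: "hist_step n \<delta> (R ! a) (R ! Suc a) (take (Suc D) (H (Suc a) b y0)) \<noteq> take (Suc D) (toppath (snd (R ! a)))"
      using nt[rule_format, of a] step.hyps Wd cfR by simp
    have vz': "vp (snd (R ! Suc a)) (H (Suc a) b z0)" using vz by (simp add: cf_def)
    have vy': "vp (snd (R ! Suc a)) (H (Suc a) b y0)" using vy by (simp add: cf_def)
    have X: "take D (hist_step n \<delta> (R ! a) (R ! Suc a) (H (Suc a) b z0)) = take D (hist_step n \<delta> (R ! a) (R ! Suc a) (H (Suc a) b y0)) \<and>
      hist_step n \<delta> (R ! a) (R ! Suc a) (H (Suc a) b z0) ! D = hist_step n \<delta> (R ! a) (R ! Suc a) (H (Suc a) b y0) ! D + 1"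
      using step_pair[OF so D vz' vy' conjunct1[OF IH] conjunct2[OF IH] ne] .
    have hz: "H a b z0 = hist_step n \<delta> (R ! a) (R ! Suc a) (H (Suc a) b z0)" using H_step step.hyps ab by simp
    have hy: "H a b y0 = hist_step n \<delta> (R ! a) (R ! Suc a) (H (Suc a) b y0)" using H_step step.hyps ab by simp
    show "take D (H a b z0) = take D (H a b y0) \<and> H a b z0 ! D = H a b y0 ! D + 1"
      unfolding hz hy by (rule X)
  qed
qed

end


lemma st_read: "stepok n \<delta> c c' \<Longrightarrow> trans_at \<delta> c = Some (Read f) \<Longrightarrow> snd c' = snd c \<and> (\<forall>x. hist_step n \<delta> c c' x = x)"
  by (cases rule: stepok_cases) auto

lemma st_pop: "stepok n \<delta> c c' \<Longrightarrow> trans_at \<delta> c = Some (Op q (Pop k)) \<Longrightarrow>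
   pop_d (n - k) (snd c) = Some (snd c') \<and> (\<forall>x. hist_step n \<delta> c c' x = x) \<and> 1 \<le> k \<and> k \<le> n"
  by (cases rule: stepok_cases) auto

lemma st_push: "stepok n \<delta> c c' \<Longrightarrow> trans_at \<delta> c = Some (Op q (Push k g)) \<Longrightarrow>
   snd c' = push_d (n - k) g (snd c) \<and>
   (\<forall>x. hist_step n \<delta> c c' x = (if take (Suc (n - k)) x = take (Suc (n - k)) (toppath (snd c'))
             then x[n - k := x ! (n - k) - 1] else x)) \<and>
   toppath (snd c') = (toppath (snd c))[n - k := toppath (snd c) ! (n - k) + 1] \<and> 1 \<le> k \<and> k \<le> n"
  by (cases rule: stepok_cases) auto

lemma neq_snoc: "d < length (x :: nat list) \<Longrightarrow> 0 < x ! d \<Longrightarrow> take d x @ [x ! d - 1] \<noteq> take (Suc d) x"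
proof
  assume a: "d < length x" "0 < x ! d" "take d x @ [x ! d - 1] = take (Suc d) x"
  then have "x ! d - 1 = x ! d" by (simp add: take_Suc_nth)
  with a(2) show False by (cases "x ! d") auto
qed

lemma hs_top_self:
  assumes so: "stepok n \<delta> c c'"
  shows "hist_step n \<delta> c c' (toppath (snd c)) = toppath (snd c)"
  using so
proof (cases rule: stepok_cases)
  case rd then show ?thesis by simp
next
  case pp then show ?thesis by simp
next
  case (ps q k g)
  have lp: "length (toppath (snd c)) = n" using stepok_toplen[OF so] by simp
  have "take (Suc (n - k)) (toppath (snd c)) \<noteq> take (Suc (n - k)) (toppath (snd c'))"
  proof
    assume "take (Suc (n - k)) (toppath (snd c)) = take (Suc (n - k)) (toppath (snd c'))"
    then have "take (Suc (n - k)) (toppath (snd c)) ! (n - k) = take (Suc (n - k)) (toppath (snd c')) ! (n - k)" by simp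
    then have "toppath (snd c) ! (n - k) = toppath (snd c') ! (n - k)" using lp ps(2,3) by simp
    moreover have D: "n - k < length (toppath (snd c))" using lp ps(2,3) by simp
    moreover have "toppath (snd c') ! (n - k) = toppath (snd c) ! (n - k) + 1" unfolding ps(6) using D by simp
    ultimately show False by simp
  qed
  then show ?thesis using ps(5) by simp
qed

context rn begin

lemma tpc: "toppath (cf i) = tp i" by (simp add: tp_def)

lemma so0: "1 \<le> N \<Longrightarrow> stepok n \<delta> (R ! 0) (R ! 1)" using stp[of 0] by simp

lemma tp_pos: "i \<le> N \<Longrightarrow> d < n \<Longrightarrow> 0 < tp i ! d"
  using vp_pos[OF tp_vp(1)] tp_vp(2) by simp

lemma RET_neq0: "a \<le> N \<Longrightarrow> r \<le> n \<Longrightarrow> 1 \<le> r \<Longrightarrow>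
  take (Suc (n - r)) X = take (n - r) (tp a) @ [tp a ! (n - r) - 1] \<Longrightarrow> take (Suc (n - r)) X \<noteq> take (Suc (n - r)) (tp a)"
  using neq_snoc[of "n - r" "tp a"] tp_vp(2)[of a] tp_pos[of a "n - r"] by simp

lemma RET_shift:
  assumes r: "1 \<le> r" "r \<le> n" and N1: "1 \<le> N" and d0: "tp 0 ! (n - r) = tp 1 ! (n - r)"
    and t0: "take (n - r) (tp 0) = take (n - r) (tp 1)"
    and hh: "take (Suc (n - r)) (H 0 N (tp N)) = take (Suc (n - r)) (H 1 N (tp N))"
  shows "RET r 0 N \<longleftrightarrow> RET r 1 N"
proof
  assume h: "RET r 0 N"
  then show "RET r 1 N" unfolding RET_def using d0 t0 hh by auto
next
  assume h: "RET r 1 N"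
  then have e: "take (Suc (n - r)) (H 0 N (tp N)) = take (n - r) (tp 0) @ [tp 0 ! (n - r) - 1]"
    unfolding RET_def using d0 t0 hh by auto
  have "\<forall>i. 0 \<le> i \<longrightarrow> i < N \<longrightarrow> take (Suc (n - r)) (H i N (tp N)) \<noteq> take (Suc (n - r)) (tp i)"
  proof (intro allI impI)
    fix i :: nat assume "i < N"
    show "take (Suc (n - r)) (H i N (tp N)) \<noteq> take (Suc (n - r)) (tp i)"
    proof (cases "i = 0")
      case True then show ?thesis using RET_neq0[of 0 r] e r by simp
    next
      case False then show ?thesis using h \<open>i < N\<close> unfolding RET_def by auto
    qed
  qed
  then show "RET r 0 N" using h e d0 unfolding RET_def by auto
qed

lemma L_read:
  assumes r: "1 \<le> r" "r \<le> n" and N1: "1 \<le> N" and t: "trans_at \<delta> (R ! 0) = Some (Read f)"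
  shows "RET r 0 N \<longleftrightarrow> RET r 1 N"
proof -
  from st_read[OF so0[OF N1] t] have a: "cf 1 = cf 0" "\<And>x. hist_step n \<delta> (R ! 0) (R ! 1) x = x" by (auto simp: cf_def)
  have "H 0 N (tp N) = H 1 N (tp N)" using H_step[of 0 N] N1 a by simp
  then show ?thesis using RET_shift[OF r N1] a by (simp add: tp_def)
qed

lemma L_popless:
  assumes r: "1 \<le> r" "r \<le> n" and N1: "1 \<le> N" and t: "trans_at \<delta> (R ! 0) = Some (Op q (Pop k))" and kr: "k < r"
  shows "RET r 0 N \<longleftrightarrow> RET r 1 N"
proof -
  from st_pop[OF so0[OF N1] t] have a: "pop_d (n - k) (cf 0) = Some (cf 1)" "\<And>x. hist_step n \<delta> (R ! 0) (R ! 1) x = x" "1 \<le> k"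
    by (simp_all only: cfR(1) tpc)
  have tp1: "take (Suc (n - k)) (tp 1) = take (n - k) (tp 0) @ [tp 0 ! (n - k) - 1]"
    using top_pop[OF wfc[of 0] _ a(1)] a kr r unfolding tp_def by simp
  have l0: "length (tp 0) = n" "length (tp 1) = n" using tp_vp(2) N1 by auto
  have "take (Suc (n - r)) (tp 1) = take (Suc (n - r)) (take (Suc (n - k)) (tp 1))" using kr by (simp add: tt)
  also have "\<dots> = take (Suc (n - r)) (take (n - k) (tp 0))" unfolding tp1 using kr r l0 by simp
  also have "\<dots> = take (Suc (n - r)) (tp 0)" using kr r by (simp add: tt)
  finally have e: "take (Suc (n - r)) (tp 1) = take (Suc (n - r)) (tp 0)" .
  then have "take (n - r) (tp 1) @ [tp 1 ! (n - r)] = take (n - r) (tp 0) @ [tp 0 ! (n - r)]"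
    using l0 r take_Suc_nth[of "n - r" "tp 1"] take_Suc_nth[of "n - r" "tp 0"] by simp
  moreover have "H 0 N (tp N) = H 1 N (tp N)" using H_step[of 0 N] N1 a by simp
  ultimately show ?thesis using RET_shift[OF r N1] by simp
qed

lemma L_pushless:
  assumes r: "1 \<le> r" "r \<le> n" and N1: "1 \<le> N" and t: "trans_at \<delta> (R ! 0) = Some (Op q (Push k g))" and kr: "k < r"
  shows "RET r 0 N \<longleftrightarrow> RET r 1 N"
proof -
  from st_push[OF so0[OF N1] t] have a: "\<And>x. hist_step n \<delta> (R ! 0) (R ! 1) x = (if take (Suc (n - k)) x = take (Suc (n - k)) (tp 1)
             then x[n - k := x ! (n - k) - 1] else x)" "tp 1 = (tp 0)[n - k := tp 0 ! (n - k) + 1]" "1 \<le> k"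
    by (simp_all only: cfR(1) tpc)
  have D: "n - r < n - k" using kr r by simp
  have "tp 0 ! (n - r) = tp 1 ! (n - r)" "take (n - r) (tp 0) = take (n - r) (tp 1)"
    using a(2) D by (simp_all add: nth_list_update_neq)
  moreover have "take (Suc (n - r)) (H 0 N (tp N)) = take (Suc (n - r)) (H 1 N (tp N))"
    using H_step[of 0 N] N1 a(1) D by simp
  ultimately show ?thesis using RET_shift[OF r N1] by simp
qed

lemma L_popeq1:
  assumes r: "1 \<le> r" "r \<le> n" and N1: "1 \<le> N" and t: "trans_at \<delta> (R ! 0) = Some (Op q (Pop r))"
    and h: "RET r 0 N"
  shows "N = 1"
proof (rule ccontr)
  assume "N \<noteq> 1"
  with N1 have N2: "1 < N" by simp
  from st_pop[OF so0[OF N1] t] have a: "pop_d (n - r) (cf 0) = Some (cf 1)" "\<And>x. hist_step n \<delta> (R ! 0) (R ! 1) x = x"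
    by (simp_all only: cfR(1) tpc)
  have tp1: "take (Suc (n - r)) (tp 1) = take (n - r) (tp 0) @ [tp 0 ! (n - r) - 1]"
    using top_pop[OF wfc[of 0] _ a(1)] r unfolding tp_def by simp
  have "H 0 N (tp N) = H 1 N (tp N)" using H_step[of 0 N] N1 a by simp
  with h tp1 have "take (Suc (n - r)) (H 1 N (tp N)) = take (Suc (n - r)) (tp 1)" unfolding RET_def by simp
  with h N2 show False unfolding RET_def by auto
qed

lemma L_popeq2:
  assumes r: "1 \<le> r" "r \<le> n" and N1: "N = 1" and t: "trans_at \<delta> (R ! 0) = Some (Op q (Pop r))"
  shows "RET r 0 N"
proof -
  from st_pop[OF so0 t] N1 have a: "pop_d (n - r) (cf 0) = Some (cf 1)" "\<And>x. hist_step n \<delta> (R ! 0) (R ! 1) x = x"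
    by (simp_all only: cfR(1) tpc)
  have tp1: "take (Suc (n - r)) (tp 1) = take (n - r) (tp 0) @ [tp 0 ! (n - r) - 1]"
    using top_pop[OF wfc[of 0] _ a(1)] r unfolding tp_def by simp
  have two: "2 \<le> tp 0 ! (n - r)" using pop_some[OF wfc[of 0], of "n - r"] a(1) r unfolding tp_def by simp
  have H0: "H 0 N (tp N) = tp 1" using H_step[of 0 N] H_same[of 1] N1 a by simp
  have "\<forall>i. 0 \<le> i \<longrightarrow> i < N \<longrightarrow> take (Suc (n - r)) (H i N (tp N)) \<noteq> take (Suc (n - r)) (tp i)"
    using RET_neq0[of 0 r "tp 1"] tp1 H0 r N1 by auto
  then show ?thesis unfolding RET_def using two tp1 H0 N1 by simp
qed

lemma L_popmore:
  assumes r: "1 \<le> r" "r \<le> n" and N1: "1 \<le> N" and t: "trans_at \<delta> (R ! 0) = Some (Op q (Pop k))" and kr: "r < k"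
  shows "\<not> RET r 0 N"
proof
  assume h: "RET r 0 N"
  from st_pop[OF so0[OF N1] t] have a: "pop_d (n - k) (cf 0) = Some (cf 1)" "\<And>x. hist_step n \<delta> (R ! 0) (R ! 1) x = x" "k \<le> n"
    by (simp_all only: cfR(1) tpc)
  have H0: "H 0 N (tp N) = H 1 N (tp N)" using H_step[of 0 N] N1 a by simp
  have v: "vp (cf 1) (H 1 N (tp N))" using H_vp[of 1 N] tp_vp N1 by simp
  have D: "n - k < n" "n - k < n - r" using kr r a by auto
  from vp_pop[OF wfc[of 0] D(1) a(1) v] have ne: "take (Suc (n - k)) (H 1 N (tp N)) \<noteq> take (Suc (n - k)) (tp 0)"
    unfolding tp_def by simp
  from h H0 have "take (Suc (n - r)) (H 1 N (tp N)) = take (n - r) (tp 0) @ [tp 0 ! (n - r) - 1]" unfolding RET_def by simp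
  then have "take (Suc (n - k)) (take (Suc (n - r)) (H 1 N (tp N))) = take (Suc (n - k)) (take (n - r) (tp 0))"
    using D tp_vp(2)[of 0] by simp
  then have "take (Suc (n - k)) (H 1 N (tp N)) = take (Suc (n - k)) (tp 0)" using D by (simp add: tt)
  with ne show False by simp
qed


lemma H_len: "a \<le> b \<Longrightarrow> b \<le> N \<Longrightarrow> vp (cf b) x \<Longrightarrow> length (H a b x) = n"
  using vp_len H_vp by (meson le_trans)

lemma tsn: "Suc m \<le> length a \<Longrightarrow> Suc m \<le> length b \<Longrightarrow> (take (Suc m) a = take (Suc m) b) = (\<forall>i\<le>m. a ! i = b ! i)"
  using take_eq_nth[of "Suc m" a b] by (auto simp: less_Suc_eq_le)

lemma L_pushmore_back:
  assumes r: "1 \<le> r" "r \<le> n" and N1: "1 \<le> N" and t: "trans_at \<delta> (R ! 0) = Some (Op q (Push k g))" and kr: "r < k"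
    and h: "RET r 1 N"
  shows "RET r 0 N"
proof -
  from st_push[OF so0[OF N1] t] have a: "\<And>x. hist_step n \<delta> (R ! 0) (R ! 1) x = (if take (Suc (n - k)) x = take (Suc (n - k)) (tp 1)
             then x[n - k := x ! (n - k) - 1] else x)" "tp 1 = (tp 0)[n - k := tp 0 ! (n - k) + 1]" "k \<le> n"
    by (simp_all only: cfR(1) tpc)
  define d where "d = n - r"
  define D where "D = n - k"
  have Dd: "D < d" "d < n" using kr r a d_def D_def by auto
  have l0: "length (tp 0) = n" "length (tp 1) = n" using tp_vp(2) N1 by auto
  let ?A1 = "H 1 N (tp N)"
  have lA1: "length ?A1 = n" using H_len[of 1 N] tp_vp N1 by simp
  from h have h2: "2 \<le> tp 1 ! d" and he: "take (Suc d) ?A1 = take d (tp 1) @ [tp 1 ! d - 1]"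
    and hnu: "\<forall>i. 1 \<le> i \<longrightarrow> i < N \<longrightarrow> take (Suc d) (H i N (tp N)) \<noteq> take (Suc d) (tp i)"
    unfolding RET_def d_def by auto
  from he have hA: "\<forall>i<d. ?A1 ! i = tp 1 ! i" "?A1 ! d = tp 1 ! d - 1"
    using take_snoc_nth[of d ?A1 "tp 1"] lA1 l0 Dd by auto
  have t10: "\<And>i. i \<noteq> D \<Longrightarrow> tp 1 ! i = tp 0 ! i" "tp 1 ! D = tp 0 ! D + 1"
    using a(2) l0 Dd unfolding D_def by auto
  have C: "take (Suc D) ?A1 = take (Suc D) (tp 1)"
    using tsn[of D ?A1 "tp 1"] lA1 l0 Dd hA by auto
  have A0: "H 0 N (tp N) = ?A1[D := ?A1 ! D - 1]"
    using H_step[of 0 N "tp N"] N1 a(1) C unfolding D_def by simp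
  let ?A0 = "H 0 N (tp N)"
  have lA0: "length ?A0 = n" using A0 lA1 by simp
  have e0: "take (Suc d) ?A0 = take d (tp 0) @ [tp 0 ! d - 1]"
  proof -
    have "\<forall>i<d. ?A0 ! i = tp 0 ! i"
    proof (intro allI impI)
      fix i assume "i < d"
      then show "?A0 ! i = tp 0 ! i" using A0 hA t10 lA1 Dd by (cases "i = D") auto
    qed
    moreover have "?A0 ! d = tp 0 ! d - 1" using A0 hA t10 Dd by simp
    ultimately show ?thesis using take_snoc_nth[of d ?A0 "tp 0"] lA0 l0 Dd by auto
  qed
  have two: "2 \<le> tp 0 ! d" using h2 t10 Dd by simp
  have "\<forall>i. 0 \<le> i \<longrightarrow> i < N \<longrightarrow> take (Suc d) (H i N (tp N)) \<noteq> take (Suc d) (tp i)"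
  proof (intro allI impI)
    fix i :: nat assume "i < N"
    show "take (Suc d) (H i N (tp N)) \<noteq> take (Suc d) (tp i)"
    proof (cases "i = 0")
      case True then show ?thesis using RET_neq0[of 0 r ?A0] e0 r unfolding d_def by simp
    next
      case False then show ?thesis using hnu \<open>i < N\<close> by auto
    qed
  qed
  then show ?thesis unfolding RET_def using two e0 d_def by simp
qed


lemma L_push3_back:
  assumes r: "1 \<le> r" "r \<le> n" and t: "trans_at \<delta> (R ! 0) = Some (Op q (Push k g))" and kr: "r \<le> k"
    and j: "1 \<le> j" "j \<le> N" and hS: "RET k 1 j" and hT: "RET r j N"
  shows "RET r 0 N"
proof -
  have N1: "1 \<le> N" using j by simp
  have so: "stepok n \<delta> (R ! 0) (R ! 1)" using so0[OF N1] .
  from st_push[OF so t] have a: "\<And>x. hist_step n \<delta> (R ! 0) (R ! 1) x = (if take (Suc (n - k)) x = take (Suc (n - k)) (tp 1)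
             then x[n - k := x ! (n - k) - 1] else x)" "tp 1 = (tp 0)[n - k := tp 0 ! (n - k) + 1]" "k \<le> n"
    by (simp_all only: cfR(1) tpc)
  define d where "d = n - r"
  define D where "D = n - k"
  have Dd: "D \<le> d" "d < n" "D < n" using kr r a d_def D_def by auto
  have l0: "\<And>i. i \<le> N \<Longrightarrow> length (tp i) = n" using tp_vp(2) by auto
  have t10: "\<And>i. i \<noteq> D \<Longrightarrow> tp 1 ! i = tp 0 ! i" "tp 1 ! D = tp 0 ! D + 1"
    using a(2) l0[of 0] Dd unfolding D_def by auto
  from hS have S2: "2 \<le> tp 1 ! D" and Seq: "take (Suc D) (H 1 j (tp j)) = take D (tp 1) @ [tp 1 ! D - 1]"
    and Snu: "\<forall>i. 1 \<le> i \<longrightarrow> i < j \<longrightarrow> take (Suc D) (H i j (tp j)) \<noteq> take (Suc D) (tp i)"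
    unfolding RET_def D_def by auto
  from hT have T2: "2 \<le> tp j ! d" and Teq: "take (Suc d) (H j N (tp N)) = take d (tp j) @ [tp j ! d - 1]"
    and Tnu: "\<forall>i. j \<le> i \<longrightarrow> i < N \<longrightarrow> take (Suc d) (H i N (tp N)) \<noteq> take (Suc d) (tp i)"
    unfolding RET_def d_def by auto
  let ?hj = "H j N (tp N)"
  have vhj: "vp (cf j) ?hj" using H_vp[of j N "tp N"] tp_vp j by simp
  have lhj: "length ?hj = n" using vp_len[OF j(2) vhj] .
  have hjn: "\<forall>i<d. ?hj ! i = tp j ! i" "?hj ! d = tp j ! d - 1"
    using Teq take_snoc_nth[of d ?hj "tp j"] lhj l0[of j] j Dd by auto
  have hjD: "take D ?hj = take D (tp j)" "?hj ! D \<le> tp j ! D"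
  proof -
    show "take D ?hj = take D (tp j)" using take_eq_nth[of D ?hj "tp j"] hjn lhj l0[of j] j Dd by auto
    show "?hj ! D \<le> tp j ! D" using hjn Dd by (cases "D = d") auto
  qed
  have GRi: "\<And>i. 1 \<le> i \<Longrightarrow> i \<le> j \<Longrightarrow>
      H i N (tp N) = take D (H i j (tp j)) @ drop D ?hj \<and> H i j (tp j) ! D = tp j ! D \<and>
      sub (cf i) (take (Suc D) (H i j (tp j))) = sub (cf j) (take (Suc D) (tp j))"
  proof -
    fix i assume i: "1 \<le> i" "i \<le> j"
    have hyp: "\<forall>i'. i \<le> i' \<longrightarrow> i' < j \<longrightarrow> take (Suc D) (H i' j (tp j)) \<noteq> take (Suc D) (tp i')"
      using Snu i by auto
    from GR[OF i(2) j(2) Dd(3) tp_vp(1)[OF j(2)]] hyp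
    have g1: "\<And>y. vp (cf j) y \<Longrightarrow> take D y = take D (tp j) \<Longrightarrow> y ! D \<le> tp j ! D \<Longrightarrow> H i j y = take D (H i j (tp j)) @ drop D y"
      and g2: "sub (cf i) (take (Suc D) (H i j (tp j))) = sub (cf j) (take (Suc D) (tp j))" by auto
    have "H i N (tp N) = H i j ?hj" using H_comp[of i j N] i j by simp
    also have "\<dots> = take D (H i j (tp j)) @ drop D ?hj" using g1[OF vhj hjD] .
    finally have e1: "H i N (tp N) = take D (H i j (tp j)) @ drop D ?hj" .
    have "H i j (tp j) = take D (H i j (tp j)) @ drop D (tp j)" using g1[OF tp_vp(1)[OF j(2)]] by simp
    then have "H i j (tp j) ! D = (take D (H i j (tp j)) @ drop D (tp j)) ! D" by simp
    also have "\<dots> = tp j ! D" using H_len[of i j "tp j"] i j tp_vp(1)[OF j(2)] l0[of j] Dd by (simp add: nth_append)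
    finally show "H i N (tp N) = take D (H i j (tp j)) @ drop D ?hj \<and> H i j (tp j) ! D = tp j ! D \<and>
      sub (cf i) (take (Suc D) (H i j (tp j))) = sub (cf j) (take (Suc D) (tp j))" using e1 g2 by simp
  qed
  let ?G1 = "H 1 j (tp j)"
  have lG1: "length ?G1 = n" using H_len[of 1 j "tp j"] j tp_vp(1)[OF j(2)] by simp
  have G1n: "\<forall>i<D. ?G1 ! i = tp 0 ! i" "?G1 ! D = tp 0 ! D"
  proof -
    have "\<forall>i<D. ?G1 ! i = tp 1 ! i" "?G1 ! D = tp 1 ! D - 1"
      using Seq take_snoc_nth[of D ?G1 "tp 1"] lG1 l0[of 1] N1 Dd by auto
    then show "\<forall>i<D. ?G1 ! i = tp 0 ! i" "?G1 ! D = tp 0 ! D" using t10 by auto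
  qed
  have tjD: "tp j ! D = tp 0 ! D" using GRi[of 1] j G1n by simp
  let ?h1 = "H 1 N (tp N)"
  have h1e: "?h1 = take D ?G1 @ drop D ?hj" using GRi[of 1] j by simp
  have h1n: "\<And>i. i < D \<Longrightarrow> ?h1 ! i = tp 0 ! i" "\<And>i. D \<le> i \<Longrightarrow> i < n \<Longrightarrow> ?h1 ! i = ?hj ! i"
    using h1e G1n lG1 lhj Dd by (auto simp: nth_append)
  have lh1: "length ?h1 = n" using h1e lG1 lhj Dd by simp
  have hjD2: "?hj ! D \<noteq> tp 1 ! D" using hjn tjD t10 Dd by (cases "D = d") auto
  have nC: "take (Suc (n - k)) ?h1 \<noteq> take (Suc (n - k)) (tp 1)"
    using tsn[of D ?h1 "tp 1"] lh1 l0[of 1] N1 Dd h1n(2)[of D] hjD2 unfolding D_def by auto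
  let ?h0 = "H 0 N (tp N)"
  have h0e: "?h0 = ?h1" using H_step[of 0 N "tp N"] N1 a(1) nC by simp
  have e0: "take (Suc d) ?h0 = take d (tp 0) @ [tp 0 ! d - 1]"
  proof (cases "D < d")
    case True
    \<comment> \<open>sub equality transports the deeper part of the top path\<close>
    have "\<forall>i\<le>D. ?G1 ! i = tp 0 ! i" using G1n le_neq_implies_less by blast
    then have G1t: "take (Suc D) ?G1 = take (Suc D) (tp 0)"
      using tsn[of D ?G1 "tp 0"] lG1 l0[of 0] Dd by simp
    have ntG': "take (Suc D) ?G1 \<noteq> take (Suc D) (tp 1)"
    proof
      assume "take (Suc D) ?G1 = take (Suc D) (tp 1)"
      then have "take (Suc D) ?G1 ! D = take (Suc D) (tp 1) ! D" by simp
      then have "?G1 ! D = tp 1 ! D" by simp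
      then show False using G1n t10 by simp
    qed
    then have ntG: "take (Suc D) ?G1 \<noteq> take (Suc D) (toppath (snd (R ! 1)))" unfolding cfR(2) .
    have vG1: "vp (snd (R ! 1)) ?G1" using H_vp[of 1 j "tp j"] j tp_vp(1)[OF j(2)] unfolding cfR by simp
    have hsG: "hist_step n \<delta> (R ! 0) (R ! 1) (take (Suc D) ?G1) = take (Suc D) ?G1"
      using a(1) ntG' unfolding D_def by (simp add: tt)
    have "sub (cf 1) (take (Suc D) ?G1) = sub (cf 0) (take (Suc D) ?G1)"
      using step_sub_push[OF so t vG1 Dd(3) ntG] hsG unfolding cfR by simp
    then have sE: "sub (cf 0) (take (Suc D) (tp 0)) = sub (cf j) (take (Suc D) (tp j))"
      using GRi[of 1] j G1t by simp
    have A0: "tp 0 = take (Suc D) (tp 0) @ toppath (sub (cf 0) (take (Suc D) (tp 0)))"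
      using top_sub[OF wfc[of 0], of "Suc D"] Dd unfolding tp_def by simp
    have Aj: "tp j = take (Suc D) (tp j) @ toppath (sub (cf j) (take (Suc D) (tp j)))"
      using top_sub[OF wfc[OF j(2)], of "Suc D"] Dd unfolding tp_def by simp
    have "drop (Suc D) (tp 0) = drop (Suc D) (take (Suc D) (tp 0) @ toppath (sub (cf 0) (take (Suc D) (tp 0))))"
      using A0 by (rule arg_cong)
    also have "\<dots> = toppath (sub (cf 0) (take (Suc D) (tp 0)))" using l0[of 0] Dd by simp
    finally have d0: "drop (Suc D) (tp 0) = toppath (sub (cf 0) (take (Suc D) (tp 0)))" .
    have "drop (Suc D) (tp j) = drop (Suc D) (take (Suc D) (tp j) @ toppath (sub (cf j) (take (Suc D) (tp j))))"
      using Aj by (rule arg_cong)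
    also have "\<dots> = toppath (sub (cf j) (take (Suc D) (tp j)))" using l0[of j] j Dd by simp
    finally have dj: "drop (Suc D) (tp j) = toppath (sub (cf j) (take (Suc D) (tp j)))" .
    have dd: "drop (Suc D) (tp 0) = drop (Suc D) (tp j)" using d0 dj sE by simp
    have tj0: "\<And>i. Suc D \<le> i \<Longrightarrow> i < n \<Longrightarrow> tp j ! i = tp 0 ! i"
    proof -
      fix i assume i: "Suc D \<le> i" "i < n"
      have "drop (Suc D) (tp j) ! (i - Suc D) = drop (Suc D) (tp 0) ! (i - Suc D)" using dd by simp
      moreover have "Suc D + (i - Suc D) = i" using i by simp
      ultimately show "tp j ! i = tp 0 ! i" using l0[of 0] l0[of j] j i by (simp add: nth_drop)
    qed
    have "\<forall>i<d. ?h0 ! i = tp 0 ! i"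
    proof (intro allI impI)
      fix i assume i: "i < d"
      show "?h0 ! i = tp 0 ! i"
      proof (cases "i < D")
        case True then show ?thesis using h0e h1n by simp
      next
        case False
        then have "?h0 ! i = ?hj ! i" using h0e h1n(2)[of i] i Dd by simp
        also have "\<dots> = tp j ! i" using hjn i by simp
        also have "\<dots> = tp 0 ! i" using tj0[of i] tjD False i Dd by (cases "i = D") auto
        finally show ?thesis .
      qed
    qed
    moreover have "?h0 ! d = tp 0 ! d - 1" using h0e h1n(2)[of d] hjn tj0[of d] True Dd by simp
    ultimately show ?thesis using take_snoc_nth[of d ?h0 "tp 0"] lh1 h0e l0[of 0] Dd by auto
  next
    case False
    then have DD: "D = d" using Dd by simp
    have "\<forall>i<d. ?h0 ! i = tp 0 ! i" using h0e h1n DD by simp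
    moreover have "?h0 ! d = tp 0 ! d - 1" using h0e h1n(2)[of d] hjn tjD DD Dd by simp
    ultimately show ?thesis using take_snoc_nth[of d ?h0 "tp 0"] lh1 h0e l0[of 0] Dd by auto
  qed
  have two: "2 \<le> tp 0 ! d"
  proof -
    have v0: "vp (cf 0) ?h0" using H_vp[of 0 N "tp N"] tp_vp by simp
    have "?h0 ! d = tp 0 ! d - 1" using e0 take_snoc_nth[of d ?h0 "tp 0"] lh1 h0e l0[of 0] Dd by auto
    moreover have "0 < ?h0 ! d" using vp_pos[OF v0] lh1 h0e Dd by simp
    ultimately show ?thesis by simp
  qed
  have nu: "\<forall>i. 0 \<le> i \<longrightarrow> i < N \<longrightarrow> take (Suc d) (H i N (tp N)) \<noteq> take (Suc d) (tp i)"
  proof (intro allI impI)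
    fix i :: nat assume iN: "i < N"
    show "take (Suc d) (H i N (tp N)) \<noteq> take (Suc d) (tp i)"
    proof (cases "i = 0")
      case True then show ?thesis using RET_neq0[of 0 r ?h0] e0 r unfolding d_def by simp
    next
      case False
      show ?thesis
      proof (cases "i < j")
        case False then show ?thesis using Tnu iN by auto
      next
        case True
        with \<open>i \<noteq> 0\<close> have i: "1 \<le> i" "i \<le> j" by auto
        let ?Gi = "H i j (tp j)"
        have Gi: "H i N (tp N) = take D ?Gi @ drop D ?hj" "?Gi ! D = tp j ! D" using GRi[OF i] by auto
        have lGi: "length ?Gi = n" using H_len[of i j "tp j"] i j tp_vp(1)[OF j(2)] by simp
        have vGi: "vp (cf i) ?Gi" using H_vp[of i j "tp j"] i j tp_vp(1)[OF j(2)] by simp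
        have sn: "take (Suc D) ?Gi \<noteq> take (Suc D) (tp i)" using Snu i True by auto
        have li: "length (tp i) = n" using l0 i j by simp
        show ?thesis
        proof
          assume eq: "take (Suc d) (H i N (tp N)) = take (Suc d) (tp i)"
          then have "take (Suc D) (take (Suc d) (H i N (tp N))) = take (Suc D) (take (Suc d) (tp i))" by simp
          then have eqD: "take (Suc D) (H i N (tp N)) = take (Suc D) (tp i)"
            using Dd by (simp add: tt)
          have lHi: "length (H i N (tp N)) = n" using Gi(1) lGi lhj Dd by simp
          have Hn1: "\<forall>i'<D. H i N (tp N) ! i' = ?Gi ! i'" using Gi(1) lGi Dd by (simp add: nth_append)
          have Hn2: "H i N (tp N) ! D = ?hj ! D" using Gi(1) lGi lhj Dd by (simp add: nth_append)
          have "\<forall>i'\<le>D. H i N (tp N) ! i' = tp i ! i'" using eqD tsn[of D "H i N (tp N)" "tp i"] lHi li Dd by simp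
          then have a1: "\<forall>i'<D. ?Gi ! i' = tp i ! i'" "?hj ! D = tp i ! D" using Hn1 Hn2 by auto
          show False
          proof (cases "D < d")
            case True
            then have "?hj ! D = ?Gi ! D" using hjn Gi(2) by simp
            then have hG: "?hj ! D = ?Gi ! D" .
            have "\<forall>i'\<le>D. ?Gi ! i' = tp i ! i'"
            proof (intro allI impI)
              fix i' assume "i' \<le> D"
              then consider "i' < D" | "i' = D" by linarith
              then show "?Gi ! i' = tp i ! i'" using a1 hG by cases auto
            qed
            then have "take (Suc D) ?Gi = take (Suc D) (tp i)" using tsn[of D ?Gi "tp i"] lGi li Dd by simp
            then show False using sn by simp
          next
            case False
            then have DD: "D = d" using Dd by simp
            have tk: "take D ?Gi = take D (tp i)" using a1 take_eq_nth[of D ?Gi "tp i"] lGi li Dd by auto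
            have "?Gi ! D \<le> tp i ! D" using top_max[OF wfc[of i] vGi Dd(3)] tk i j unfolding tp_def by simp
            moreover have "?Gi ! D \<noteq> tp i ! D" using sn tk lGi li Dd take_Suc_nth[of D ?Gi] take_Suc_nth[of D "tp i"] by auto
            moreover have "?hj ! D = ?Gi ! D - 1" using hjn Gi(2) DD by simp
            ultimately show False using a1 by simp
          qed
        qed
      qed
    qed
  qed
  show ?thesis unfolding RET_def using two e0 nu d_def by simp
qed


lemma RET_lt: "RET r a b \<Longrightarrow> a \<le> b \<Longrightarrow> b \<le> N \<Longrightarrow> 1 \<le> r \<Longrightarrow> r \<le> n \<Longrightarrow> a < b"
proof (rule ccontr)
  assume h: "RET r a b" "a \<le> b" "b \<le> N" "1 \<le> r" "r \<le> n" "\<not> a < b"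
  then have "a = b" by simp
  with h have "take (Suc (n - r)) (tp a) = take (n - r) (tp a) @ [tp a ! (n - r) - 1]"
    unfolding RET_def using H_same[of a] by simp
  then show False using RET_neq0[of a r "tp a"] h \<open>a = b\<close> by simp
qed

lemma tp_tail: "a \<le> N \<Longrightarrow> b \<le> N \<Longrightarrow> D < n \<Longrightarrow>
   sub (cf a) (take (Suc D) (tp a)) = sub (cf b) (take (Suc D) (tp b)) \<Longrightarrow>
   Suc D \<le> i \<Longrightarrow> i < n \<Longrightarrow> tp a ! i = tp b ! i"
proof -
  assume ab: "a \<le> N" "b \<le> N" "D < n" and sE: "sub (cf a) (take (Suc D) (tp a)) = sub (cf b) (take (Suc D) (tp b))"
    and i: "Suc D \<le> i" "i < n"
  have dr: "drop (Suc D) (tp x) = toppath (sub (cf x) (take (Suc D) (tp x)))" if "x \<le> N" for x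
  proof -
    have A: "tp x = take (Suc D) (tp x) @ toppath (sub (cf x) (take (Suc D) (tp x)))"
      using top_sub[OF wfc[OF that], of "Suc D"] ab unfolding tp_def by simp
    have "drop (Suc D) (tp x) = drop (Suc D) (take (Suc D) (tp x) @ toppath (sub (cf x) (take (Suc D) (tp x))))"
      using A by (rule arg_cong)
    also have "\<dots> = toppath (sub (cf x) (take (Suc D) (tp x)))" using tp_vp(2)[OF that] ab by simp
    finally show ?thesis .
  qed
  have dd: "drop (Suc D) (tp a) = drop (Suc D) (tp b)" using dr[OF ab(1)] dr[OF ab(2)] sE by simp
  have "drop (Suc D) (tp a) ! (i - Suc D) = drop (Suc D) (tp b) ! (i - Suc D)" using dd by simp
  moreover have "Suc D + (i - Suc D) = i" using i by simp
  ultimately show "tp a ! i = tp b ! i" using tp_vp(2)[OF ab(1)] tp_vp(2)[OF ab(2)] i by (simp add: nth_drop)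
qed

lemma sub_push0:
  assumes N1: "1 \<le> N" and t: "trans_at \<delta> (R ! 0) = Some (Op q (Push k g))" and D: "D < n"
    and v: "vp (cf 1) y" and ne: "take (Suc D) y \<noteq> take (Suc D) (tp 1)"
    and hs: "hist_step n \<delta> (R ! 0) (R ! 1) (take (Suc D) y) = take (Suc D) y"
  shows "sub (cf 1) (take (Suc D) y) = sub (cf 0) (take (Suc D) y)"
  using step_sub_push[OF so0[OF N1] t _ D] v ne hs unfolding cfR tpc by simp


lemma L_push3_fwd_gt:
  assumes r: "1 \<le> r" "r \<le> n" and t: "trans_at \<delta> (R ! 0) = Some (Op q (Push k g))" and kr: "r < k"
    and h: "RET r 0 N"
  shows "RET r 1 N \<or> (\<exists>j. 1 \<le> j \<and> j \<le> N \<and> RET k 1 j \<and> RET r j N)"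
proof -
  have N1: "1 \<le> N" using RET_lt[OF h _ _ r] by simp
  have so: "stepok n \<delta> (R ! 0) (R ! 1)" using so0[OF N1] .
  from st_push[OF so t] have a: "\<And>x. hist_step n \<delta> (R ! 0) (R ! 1) x = (if take (Suc (n - k)) x = take (Suc (n - k)) (tp 1)
             then x[n - k := x ! (n - k) - 1] else x)" "tp 1 = (tp 0)[n - k := tp 0 ! (n - k) + 1]" "k \<le> n"
    by (simp_all only: cfR(1) tpc)
  define d where "d = n - r"
  define D where "D = n - k"
  have Dd: "D < d" "d < n" "D < n" using kr r a d_def D_def by auto
  have l0: "\<And>i. i \<le> N \<Longrightarrow> length (tp i) = n" using tp_vp(2) by auto
  have t10: "\<And>i. i \<noteq> D \<Longrightarrow> tp 1 ! i = tp 0 ! i" "tp 1 ! D = tp 0 ! D + 1"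
    using a(2) l0[of 0] Dd unfolding D_def by auto
  from h have R2: "2 \<le> tp 0 ! d" and Req: "take (Suc d) (H 0 N (tp N)) = take d (tp 0) @ [tp 0 ! d - 1]"
    and Rnu: "\<forall>i. i < N \<longrightarrow> take (Suc d) (H i N (tp N)) \<noteq> take (Suc d) (tp i)"
    unfolding RET_def d_def by auto
  let ?h0 = "H 0 N (tp N)" and ?h1 = "H 1 N (tp N)"
  have lh: "\<And>i. i \<le> N \<Longrightarrow> length (H i N (tp N)) = n" using H_len tp_vp by simp
  have h0n: "\<forall>i<d. ?h0 ! i = tp 0 ! i" "?h0 ! d = tp 0 ! d - 1"
    using Req take_snoc_nth[of d ?h0 "tp 0"] lh[of 0] l0[of 0] Dd by auto
  have h01: "?h0 = hist_step n \<delta> (R ! 0) (R ! 1) ?h1" using H_step[of 0 N] N1 by simp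
  show ?thesis
  proof (cases "take (Suc D) ?h1 = take (Suc D) (tp 1)")
    case C: True
    have e: "?h0 = ?h1[D := ?h1 ! D - 1]" using h01 a(1) C unfolding D_def by simp
    have h1D: "?h1 ! D = tp 1 ! D" using C tsn[of D ?h1 "tp 1"] lh[of 1] l0[of 1] N1 Dd by simp
    have "\<forall>i<d. ?h1 ! i = tp 1 ! i"
    proof (intro allI impI)
      fix i assume i: "i < d"
      show "?h1 ! i = tp 1 ! i"
      proof (cases "i = D")
        case True then show ?thesis using h1D by simp
      next
        case False
        then have "?h1 ! i = ?h0 ! i" using e by simp
        then show ?thesis using h0n i t10 False by simp
      qed
    qed
    moreover have "?h1 ! d = tp 1 ! d - 1" using e h0n t10 Dd by simp
    ultimately have e1: "take (Suc d) ?h1 = take d (tp 1) @ [tp 1 ! d - 1]"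
      using take_snoc_nth[of d ?h1 "tp 1"] lh[of 1] l0[of 1] N1 Dd by simp
    have "RET r 1 N" unfolding RET_def using e1 R2 t10 Dd Rnu d_def by auto
    then show ?thesis by simp
  next
    case nC: False
    have h10: "?h0 = ?h1" using h01 a(1) nC unfolding D_def by simp
    define P where "P i \<longleftrightarrow> 1 \<le> i \<and> i \<le> N \<and> take (Suc D) (H i N (tp N)) = take (Suc D) (tp i)" for i
    have PN: "P N" unfolding P_def using N1 H_same[of N] by simp
    define j where "j = (LEAST i. P i)"
    have Pj: "P j" unfolding j_def using PN by (rule LeastI)
    have jmin: "\<And>i. i < j \<Longrightarrow> \<not> P i" unfolding j_def by (rule not_less_Least)
    have j: "1 \<le> j" "j \<le> N" using Pj unfolding P_def by auto
    have j1: "j \<noteq> 1" using Pj nC unfolding P_def by auto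
    have hjt: "take (Suc D) (H j N (tp N)) = take (Suc D) (tp j)" using Pj unfolding P_def by simp
    have Sx: "\<And>i. 1 \<le> i \<Longrightarrow> i \<le> j \<Longrightarrow> take (Suc D) (H i j (tp j)) = take (Suc D) (H i N (tp N))"
    proof -
      fix i assume i: "1 \<le> i" "i \<le> j"
      have "take (Suc D) (H i j (tp j)) = take (Suc D) (H i j (H j N (tp N)))"
        using H_pre[of i j "Suc D" "tp j" "H j N (tp N)"] i j hjt by simp
      also have "\<dots> = take (Suc D) (H i N (tp N))" using H_comp[of i j N] i j by simp
      finally show "take (Suc D) (H i j (tp j)) = take (Suc D) (H i N (tp N))" .
    qed
    have Snu: "\<forall>i. 1 \<le> i \<longrightarrow> i < j \<longrightarrow> take (Suc D) (H i j (tp j)) \<noteq> take (Suc D) (tp i)"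
      using Sx jmin j unfolding P_def by auto
    have t0D: "take (Suc D) (tp 0) = take D (tp 1) @ [tp 1 ! D - 1]"
      using take_snoc_nth[of D "tp 0" "tp 1"] l0[of 0] l0[of 1] N1 Dd t10 by auto
    have Seq0: "take (Suc D) (H 1 j (tp j)) = take (Suc D) (tp 0)"
    proof -
      have "take (Suc D) (H 1 j (tp j)) = take (Suc D) ?h0" using Sx[of 1] j h10 by simp
      also have "\<dots> = take (Suc D) (take (Suc d) ?h0)" using Dd by (simp add: tt)
      also have "\<dots> = take (Suc D) (take d (tp 0) @ [tp 0 ! d - 1])" using Req by simp
      also have "\<dots> = take (Suc D) (tp 0)" using Dd l0[of 0] by (simp add: tt)
      finally show ?thesis .
    qed
    have S: "RET k 1 j"
    proof -
      have "2 \<le> tp 1 ! D" using t10 tp_pos[of 0 D] Dd by simp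
      then show ?thesis unfolding RET_def using Seq0 t0D Snu D_def by simp
    qed
    let ?hj = "H j N (tp N)" and ?G1 = "H 1 j (tp j)"
    have vhj: "vp (cf j) ?hj" using H_vp[of j N "tp N"] tp_vp j by simp
    have lhj: "length ?hj = n" using vp_len[OF j(2) vhj] .
    have lG1: "length ?G1 = n" using H_len[of 1 j "tp j"] j tp_vp(1)[OF j(2)] by simp
    have hjn: "\<forall>i\<le>D. ?hj ! i = tp j ! i" using hjt tsn[of D ?hj "tp j"] lhj l0[of j] j Dd by simp
    have hjD: "take D ?hj = take D (tp j)" "?hj ! D \<le> tp j ! D"
      using hjn take_eq_nth[of D ?hj "tp j"] lhj l0[of j] j Dd by auto
    from GR[OF j(1) j(2) Dd(3) tp_vp(1)[OF j(2)]] Snu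
    have g1: "\<And>y. vp (cf j) y \<Longrightarrow> take D y = take D (tp j) \<Longrightarrow> y ! D \<le> tp j ! D \<Longrightarrow> H 1 j y = take D ?G1 @ drop D y"
      and g2: "sub (cf 1) (take (Suc D) ?G1) = sub (cf j) (take (Suc D) (tp j))" by auto
    have h1e: "?h1 = take D ?G1 @ drop D ?hj"
      using H_comp[of 1 j N "tp N"] j g1[OF vhj hjD] by simp
    have "?G1 = take D ?G1 @ drop D (tp j)" using g1[OF tp_vp(1)[OF j(2)]] by simp
    then have "?G1 ! D = (take D ?G1 @ drop D (tp j)) ! D" by simp
    also have "\<dots> = tp j ! D" using lG1 l0[of j] j Dd by (simp add: nth_append)
    finally have G1D: "?G1 ! D = tp j ! D" .
    have G1t: "take (Suc D) ?G1 \<noteq> take (Suc D) (tp 1)"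
    proof
      assume "take (Suc D) ?G1 = take (Suc D) (tp 1)"
      then have "take (Suc D) ?G1 = take D (tp 1) @ [tp 1 ! D]" using l0[of 1] N1 Dd take_Suc_nth[of D "tp 1"] by simp
      moreover have "0 < tp 1 ! D" using tp_pos[of 1 D] N1 Dd by simp
      ultimately show False using Seq0 t0D by simp
    qed
    have vG1: "vp (cf 1) ?G1" using H_vp[of 1 j "tp j"] j tp_vp(1)[OF j(2)] by simp
    have hsG: "hist_step n \<delta> (R ! 0) (R ! 1) (take (Suc D) ?G1) = take (Suc D) ?G1"
      using a(1) G1t unfolding D_def by (simp add: tt)
    have sE: "sub (cf 0) (take (Suc D) (tp 0)) = sub (cf j) (take (Suc D) (tp j))"
      using sub_push0[OF N1 t Dd(3) vG1 G1t hsG] g2 Seq0 by simp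
    have tj0: "\<And>i. Suc D \<le> i \<Longrightarrow> i < n \<Longrightarrow> tp j ! i = tp 0 ! i"
      using tp_tail[of j 0 D] j sE Dd by simp
    have tjD: "tp j ! D = tp 0 ! D"
    proof -
      have "take (Suc D) ?G1 ! D = take (Suc D) (tp 0) ! D" using Seq0 by simp
      then show ?thesis using G1D by simp
    qed
    have T2: "2 \<le> tp j ! d" using R2 tj0[of d] Dd by simp
    have "\<forall>i<d. ?hj ! i = tp j ! i"
    proof (intro allI impI)
      fix i assume i: "i < d"
      show "?hj ! i = tp j ! i"
      proof (cases "i \<le> D")
        case True then show ?thesis using hjn by simp
      next
        case False
        have "?hj ! i = ?h1 ! i" using h1e lG1 lhj Dd False by (simp add: nth_append)
        also have "\<dots> = tp 0 ! i" using h10 h0n i by simp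
        also have "\<dots> = tp j ! i" using tj0[of i] False i Dd by simp
        finally show ?thesis .
      qed
    qed
    moreover have "?hj ! d = tp j ! d - 1"
    proof -
      have "?hj ! d = ?h1 ! d" using h1e lG1 lhj Dd by (simp add: nth_append)
      also have "\<dots> = tp 0 ! d - 1" using h10 h0n by simp
      finally show ?thesis using tj0[of d] Dd by simp
    qed
    ultimately have Teq: "take (Suc d) ?hj = take d (tp j) @ [tp j ! d - 1]"
      using take_snoc_nth[of d ?hj "tp j"] lhj l0[of j] j Dd by simp
    have T: "RET r j N" unfolding RET_def using T2 Teq Rnu d_def by auto
    show ?thesis using S T j by blast
  qed
qed


lemma no_expose:
  assumes r: "1 \<le> r" "r \<le> n" and N1: "1 \<le> N"
    and Req0: "take (Suc (n - r)) (H 0 N (tp N)) = take (n - r) (tp 0) @ [tp 0 ! (n - r) - 1]"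
    and Rnu: "\<forall>i<N. take (Suc (n - r)) (H i N (tp N)) \<noteq> take (Suc (n - r)) (tp i)"
    and tl: "trans_at \<delta> (R ! (N - 1)) = Some (Op q (Pop k))" and kk: "n - k < n - r"
  shows False
proof -
  define m where "m = N - 1"
  have mN: "Suc m = N" "m < N" using N1 m_def by auto
  have so: "stepok n \<delta> (R ! m) (R ! Suc m)" using stp[of m] mN by simp
  from st_pop[OF so tl[folded m_def]] have pa: "pop_d (n - k) (cf m) = Some (cf N)" "\<And>x. hist_step n \<delta> (R ! m) (R ! Suc m) x = x"
    by (simp_all only: cfR(1) mN)
  define F where "F = n - k"
  define d where "d = n - r"
  have Fd: "F < d" "d < n" "F < n" using kk r F_def d_def by auto
  have l0: "\<And>i. i \<le> N \<Longrightarrow> length (tp i) = n" using tp_vp(2) by auto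
  have vtN: "vp (cf m) (tp N)" using vp_pop[OF wfc[of m] _ pa(1) tp_vp(1)[of N]] Fd mN F_def by simp
  have HmN: "H m N (tp N) = tp N" using H_step[of m N] H_same[of N] mN pa(2) by simp
  have Hi: "\<And>i. i \<le> m \<Longrightarrow> H i N (tp N) = H i m (tp N)"
  proof -
    fix i assume "i \<le> m"
    then have "H i N (tp N) = H i m (H m N (tp N))" using H_comp[of i m N "tp N"] mN by simp
    then show "H i N (tp N) = H i m (tp N)" using HmN by simp
  qed
  define W where "W i = take (Suc F) (H i m (tp N))" for i
  have W0: "W 0 = take (Suc F) (tp 0)"
  proof -
    have "W 0 = take (Suc F) (take (Suc d) (H 0 N (tp N)))" unfolding W_def using Hi[of 0] Fd by (simp add: tt)
    also have "\<dots> = take (Suc F) (take d (tp 0) @ [tp 0 ! d - 1])" using Req0 d_def by simp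
    also have "\<dots> = take (Suc F) (tp 0)" using Fd l0[of 0] by (simp add: tt)
    finally show ?thesis .
  qed
  have tpN: "take (Suc F) (tp N) = take F (tp m) @ [tp m ! F - 1]"
    using top_pop[OF wfc[of m] _ pa(1)] Fd F_def mN unfolding tp_def by simp
  have Wm: "W m \<noteq> take (Suc F) (tp m)"
  proof -
    have "W m = take (Suc F) (tp N)" unfolding W_def using H_same[of m] mN by simp
    then show ?thesis using tpN neq_snoc[of F "tp m"] l0[of m] mN tp_pos[of m F] Fd by simp
  qed
  define Z where "Z = {i. i \<le> m \<and> W i = take (Suc F) (tp i)}"
  have Z0: "0 \<in> Z" unfolding Z_def using W0 by simp
  have fZ: "finite Z" unfolding Z_def by simp
  define s where "s = Max Z"
  have Zne: "Z \<noteq> {}" using Z0 by blast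
  have sZ: "s \<in> Z" unfolding s_def using Max_in[OF fZ Zne] .
  have smax: "\<And>i. i \<in> Z \<Longrightarrow> i \<le> s" unfolding s_def using fZ by simp
  have sZ2: "s \<le> m" "W s = take (Suc F) (tp s)" using sZ unfolding Z_def by auto
  have "s \<noteq> m" using sZ2(2) Wm by auto
  with sZ2(1) have sm: "s < m" by simp
  have notZ: "\<And>i. s < i \<Longrightarrow> i \<le> m \<Longrightarrow> W i \<noteq> take (Suc F) (tp i)"
  proof
    fix i assume i: "s < i" "i \<le> m" "W i = take (Suc F) (tp i)"
    then have "i \<in> Z" unfolding Z_def by simp
    with smax i(1) show False by fastforce
  qed
  have hyp: "\<forall>i. Suc s \<le> i \<longrightarrow> i < m \<longrightarrow> take (Suc F) (H i m (tp N)) \<noteq> take (Suc F) (tp i)"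
    using notZ unfolding W_def by auto
  have sm1: "Suc s \<le> m" "m \<le> N" using sm mN by auto
  from mp[OF GR[OF sm1 Fd(3) vtN] hyp]
  have g1: "\<And>y. vp (cf m) y \<Longrightarrow> take F y = take F (tp N) \<Longrightarrow> y ! F \<le> tp N ! F \<Longrightarrow>
      H (Suc s) m y = take F (H (Suc s) m (tp N)) @ drop F y"
    and g2: "sub (cf (Suc s)) (take (Suc F) (H (Suc s) m (tp N))) = sub (cf m) (take (Suc F) (tp N))" by auto
  let ?y1 = "H (Suc s) m (tp N)"
  have y1e: "?y1 = take F ?y1 @ drop F (tp N)" using g1[OF vtN] by simp
  have vy1: "vp (cf (Suc s)) ?y1" using H_vp[of "Suc s" m "tp N"] sm mN vtN by simp
  have ly1: "length ?y1 = n" using vp_len[of "Suc s"] vy1 sm mN by simp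
  have sos: "stepok n \<delta> (R ! s) (R ! Suc s)" using stp[of s] sm mN by simp
  have Ws: "W s = hist_step n \<delta> (R ! s) (R ! Suc s) (take (Suc F) ?y1)"
    unfolding W_def using W_step[of s m "Suc F" "tp N"] sm mN by simp
  have fz: "take (Suc F) ?y1 = take (Suc F) (tp s) \<and> sub (cf (Suc s)) (take (Suc F) ?y1) = sub (cf s) (take (Suc F) ?y1)"
  proof -
    have a1: "vp (snd (R ! Suc s)) ?y1" using vy1 unfolding cfR .
    have a2: "take (Suc F) ?y1 \<noteq> take (Suc F) (toppath (snd (R ! Suc s)))"
      using notZ[of "Suc s"] sm unfolding W_def cfR tpc by simp
    have a3: "hist_step n \<delta> (R ! s) (R ! Suc s) (take (Suc F) ?y1) = take (Suc F) (toppath (snd (R ! s)))"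
      using sZ2(2) Ws unfolding cfR tpc by simp
    from step_freeze[OF sos a1 Fd(3) a2 a3] show ?thesis unfolding cfR tpc .
  qed
  have sN: "sub (cf N) (take (Suc F) (tp N)) = sub (cf m) (take (Suc F) (tp N))"
    using sub_pop[OF wfc[of m] _ pa(1) tp_vp(1)[of N], of F] Fd F_def mN by simp
  have e1: "take (Suc F) ?y1 = take (Suc F) (tp s)" using fz by (rule conjunct1)
  have e2: "sub (cf (Suc s)) (take (Suc F) ?y1) = sub (cf s) (take (Suc F) ?y1)" using fz by (rule conjunct2)
  have "sub (cf s) (take (Suc F) (tp s)) = sub (cf s) (take (Suc F) ?y1)" unfolding e1 ..
  also have "\<dots> = sub (cf (Suc s)) (take (Suc F) ?y1)" using e2 by (rule sym)
  also have "\<dots> = sub (cf m) (take (Suc F) (tp N))" using g2 .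
  also have "\<dots> = sub (cf N) (take (Suc F) (tp N))" using sN by simp
  finally have sE: "sub (cf s) (take (Suc F) (tp s)) = sub (cf N) (take (Suc F) (tp N))" .
  have tt0: "\<And>i. Suc F \<le> i \<Longrightarrow> i < n \<Longrightarrow> tp s ! i = tp N ! i"
    using tp_tail[of s N F] sE sm mN Fd by simp
  have "?y1 = tp s"
  proof (rule nth_equalityI)
    show "length ?y1 = length (tp s)" using ly1 l0[of s] sm mN by simp
  next
    fix i assume i: "i < length ?y1"
    show "?y1 ! i = tp s ! i"
    proof (cases "i < Suc F")
      case True
      have "take (Suc F) ?y1 ! i = take (Suc F) (tp s) ! i" using fz by simp
      then show ?thesis using True by simp
    next
      case False
      have "?y1 ! i = (take F ?y1 @ drop F (tp N)) ! i" by (rule arg_cong[where f="\<lambda>l. l ! i", OF y1e])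
      also have "\<dots> = tp N ! i" using False ly1 l0[of N] i Fd by (simp add: nth_append)
      also have "\<dots> = tp s ! i" using tt0[of i] False i ly1 by simp
      finally show ?thesis .
    qed
  qed
  then have "H s N (tp N) = hist_step n \<delta> (R ! s) (R ! Suc s) (tp s)"
    using Hi[of s] H_step[of s m "tp N"] sm mN by simp
  also have "\<dots> = tp s" using hs_top_self[OF sos] unfolding cfR tpc .
  finally have "H s N (tp N) = tp s" .
  moreover have "s < N" using sm mN by simp
  ultimately show False using Rnu by auto
qed


lemma L_push3_fwd_eq:
  assumes r: "1 \<le> r" "r \<le> n" and t: "trans_at \<delta> (R ! 0) = Some (Op q (Push r g))"
    and h: "RET r 0 N"
  shows "\<exists>j. 1 \<le> j \<and> j \<le> N \<and> RET r 1 j \<and> RET r j N"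
proof -
  have N1: "1 \<le> N" using RET_lt[OF h _ _ r] by simp
  have so: "stepok n \<delta> (R ! 0) (R ! 1)" using so0[OF N1] .
  from st_push[OF so t] have a: "\<And>x. hist_step n \<delta> (R ! 0) (R ! 1) x = (if take (Suc (n - r)) x = take (Suc (n - r)) (tp 1)
             then x[n - r := x ! (n - r) - 1] else x)" "tp 1 = (tp 0)[n - r := tp 0 ! (n - r) + 1]"
    by (simp_all only: cfR(1) tpc)
  define d where "d = n - r"
  have dn: "d < n" using r d_def by auto
  have l0: "\<And>i. i \<le> N \<Longrightarrow> length (tp i) = n" using tp_vp(2) by auto
  have t10: "\<And>i. i \<noteq> d \<Longrightarrow> tp 1 ! i = tp 0 ! i" "tp 1 ! d = tp 0 ! d + 1"
    using a(2) l0[of 0] dn unfolding d_def by auto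
  from h have R2: "2 \<le> tp 0 ! d" and Req: "take (Suc d) (H 0 N (tp N)) = take d (tp 0) @ [tp 0 ! d - 1]"
    and Rnu: "\<forall>i<N. take (Suc d) (H i N (tp N)) \<noteq> take (Suc d) (tp i)"
    unfolding RET_def d_def by auto
  let ?h0 = "H 0 N (tp N)" and ?h1 = "H 1 N (tp N)"
  have lh: "\<And>i. i \<le> N \<Longrightarrow> length (H i N (tp N)) = n" using H_len tp_vp by simp
  have h0n: "\<forall>i<d. ?h0 ! i = tp 0 ! i" "?h0 ! d = tp 0 ! d - 1"
    using Req take_snoc_nth[of d ?h0 "tp 0"] lh[of 0] l0[of 0] dn by auto
  have h01: "?h0 = hist_step n \<delta> (R ! 0) (R ! 1) ?h1" using H_step[of 0 N] N1 by simp
  have N2: "2 \<le> N"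
  proof (rule ccontr)
    assume "\<not> 2 \<le> N"
    then have "N = 1" using N1 by simp
    then have "?h1 = tp 1" using H_same[of 1] by simp
    then have "?h0 = tp 0" using h01 hs_top_push[OF so t] unfolding cfR tpc by simp
    then show False using Req RET_neq0[of 0 r "tp 0"] r d_def by simp
  qed
  have nC: "take (Suc d) ?h1 \<noteq> take (Suc d) (tp 1)" using Rnu N2 by simp
  have h10: "?h0 = ?h1" using h01 a(1) nC unfolding d_def by simp
  define B where "B i \<longleftrightarrow> take (Suc d) (H i N (tp N)) = take d (tp i) @ [tp i ! d - 1]" for i
  \<comment> \<open>the last step must be a pop of order r\<close>
  have BN: "B (N - 1)"
  proof -
    define m where "m = N - 1"
    have mN: "Suc m = N" "m < N" using N1 m_def by auto
    have som: "stepok n \<delta> (R ! m) (R ! Suc m)" using stp[of m] mN by simp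
    have Rm: "take (Suc d) (H m N (tp N)) \<noteq> take (Suc d) (tp m)" using Rnu mN by simp
    have Hm: "H m N (tp N) = hist_step n \<delta> (R ! m) (R ! Suc m) (tp N)" using H_step[of m N] H_same[of N] mN by simp
    show ?thesis
    using som
    proof (cases rule: stepok_cases)
      case (rd f)
      then have "tp N = tp m" using mN unfolding cfR(1)[symmetric] tp_def by simp
      with Hm rd Rm show ?thesis by simp
    next
      case (ps q' k' g')
      have "H m N (tp N) = tp m" using Hm hs_top_push[OF som ps(1)] mN unfolding cfR tpc by simp
      with Rm show ?thesis by simp
    next
      case (pp q' k')
      have pa: "pop_d (n - k') (cf m) = Some (cf N)" using pp(4) mN unfolding cfR by simp
      have HmN: "H m N (tp N) = tp N" using Hm pp(5) by simp
      have tpN: "take (Suc (n - k')) (tp N) = take (n - k') (tp m) @ [tp m ! (n - k') - 1]"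
        using top_pop[OF wfc[of m] _ pa] pp mN unfolding tp_def by simp
      consider "n - k' < d" | "n - k' = d" | "d < n - k'" by linarith
      then show ?thesis
      proof cases
        case 1
        have "trans_at \<delta> (R ! (N - 1)) = Some (Op q' (Pop k'))" using pp(1) m_def by simp
        from no_expose[OF r N1 Req[unfolded d_def] Rnu[unfolded d_def] this] 1 d_def show ?thesis by simp
      next
        case 2
        then show ?thesis unfolding B_def m_def[symmetric] using HmN tpN by simp
      next
        case 3
        have "take (Suc d) (tp N) = take (Suc d) (take (Suc (n - k')) (tp N))" using 3 by (simp add: tt)
        also have "\<dots> = take (Suc d) (take (n - k') (tp m) @ [tp m ! (n - k') - 1])" using tpN by simp
        also have "\<dots> = take (Suc d) (tp m)" using 3 l0[of m] mN by (simp add: tt)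
        finally show ?thesis using HmN Rm by simp
      qed
    qed
  qed
  define P where "P i \<longleftrightarrow> 1 \<le> i \<and> i < N \<and> B i" for i
  have PN1: "1 \<le> N - 1" "N - 1 < N" using N2 by auto
  have PN: "P (N - 1)" unfolding P_def using BN PN1 by simp
  define j where "j = (LEAST i. P i)"
  have Pj: "P j" unfolding j_def using PN by (rule LeastI)
  have jmin: "\<And>i. i < j \<Longrightarrow> \<not> P i" unfolding j_def by (rule not_less_Least)
  have j: "1 \<le> j" "j < N" "B j" using Pj unfolding P_def by auto
  let ?hj = "H j N (tp N)"
  have vhj: "vp (cf j) ?hj" using H_vp[of j N "tp N"] tp_vp j by simp
  have lhj: "length ?hj = n" using vp_len[of j] vhj j by simp
  have hjn: "\<forall>i<d. ?hj ! i = tp j ! i" "?hj ! d = tp j ! d - 1"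
    using j(3) take_snoc_nth[of d ?hj "tp j"] lhj l0[of j] j dn unfolding B_def by auto
  have T2: "2 \<le> tp j ! d"
  proof -
    have "0 < ?hj ! d" using vp_pos[OF vhj] lhj dn by simp
    then show ?thesis using hjn by simp
  qed
  have tk: "take d (tp j) = take d ?hj" using hjn take_eq_nth[of d "tp j" ?hj] lhj l0[of j] j dn by auto
  have ix: "tp j ! d = ?hj ! d + 1" using hjn T2 by simp
  have PA: "\<And>a. 1 \<le> a \<Longrightarrow> a \<le> j \<Longrightarrow> take d (H a j (tp j)) = take d (H a N (tp N)) \<and>
      H a j (tp j) ! d = H a N (tp N) ! d + 1"
  proof -
    fix a assume a: "1 \<le> a" "a \<le> j"
    have jN: "j \<le> N" using j by simp
    have HH: "\<And>i. i \<le> j \<Longrightarrow> H i j ?hj = H i N (tp N)"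
    proof -
      fix i assume "i \<le> j"
      from H_comp[OF this jN order.refl, of "tp N"] show "H i j ?hj = H i N (tp N)" by simp
    qed
    have hyp: "\<forall>i. a \<le> i \<longrightarrow> i < j \<longrightarrow> take (Suc d) (H i j ?hj) \<noteq> take (Suc d) (tp i)"
      using Rnu HH j by auto
    from mp[OF PAIR[OF a(2) jN dn tp_vp(1)[OF jN] vhj tk ix] hyp]
    show "take d (H a j (tp j)) = take d (H a N (tp N)) \<and> H a j (tp j) ! d = H a N (tp N) ! d + 1"
      using HH[of a] a by simp
  qed
  let ?G1 = "H 1 j (tp j)"
  have lG1: "length ?G1 = n" using H_len[of 1 j "tp j"] j tp_vp(1)[of j] by simp
  have S: "RET r 1 j"
  proof -
    have two: "2 \<le> tp 1 ! d" using t10 R2 by simp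
    have "take d ?G1 = take d (tp 1)"
    proof -
      have "take d ?G1 = take d ?h0" using PA[of 1] j h10 by simp
      also have "\<dots> = take d (tp 0)" using h0n take_eq_nth[of d ?h0 "tp 0"] lh[of 0] l0[of 0] dn by auto
      also have "\<dots> = take d (tp 1)" using t10 take_eq_nth[of d "tp 0" "tp 1"] l0[of 0] l0[of 1] N1 dn by auto
      finally show ?thesis .
    qed
    then have g1: "\<forall>i<d. ?G1 ! i = tp 1 ! i" using take_eq_nth[of d ?G1 "tp 1"] lG1 l0[of 1] N1 dn by auto
    have g2: "?G1 ! d = tp 1 ! d - 1" using PA[of 1] j h10 h0n t10 R2 by simp
    have eq: "take (Suc d) ?G1 = take d (tp 1) @ [tp 1 ! d - 1]"
      using take_snoc_nth[of d ?G1 "tp 1"] g1 g2 lG1 l0[of 1] N1 dn by simp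
    have nu: "\<forall>i. 1 \<le> i \<longrightarrow> i < j \<longrightarrow> take (Suc d) (H i j (tp j)) \<noteq> take (Suc d) (tp i)"
    proof (intro allI impI notI)
      fix i assume i: "1 \<le> i" "i < j" and e: "take (Suc d) (H i j (tp j)) = take (Suc d) (tp i)"
      have iN: "i \<le> N" using i j by simp
      have lGi: "length (H i j (tp j)) = n" using H_len[of i j "tp j"] i j tp_vp(1)[of j] by simp
      have pa: "take d (H i j (tp j)) = take d (H i N (tp N))" "H i j (tp j) ! d = H i N (tp N) ! d + 1"
        using PA[of i] i by auto
      have e1: "take d (H i j (tp j)) = take d (tp i)" "H i j (tp j) ! d = tp i ! d"
        using e lGi l0[of i] iN dn take_Suc_nth[of d "H i j (tp j)"] take_Suc_nth[of d "tp i"] by auto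
      have "B i"
      proof -
        have "\<forall>i'<d. H i N (tp N) ! i' = tp i ! i'"
          using pa(1) e1(1) take_eq_nth[of d "H i N (tp N)" "tp i"] lh[of i] l0[of i] iN dn by auto
        moreover have "H i N (tp N) ! d = tp i ! d - 1" using pa(2) e1(2) by simp
        ultimately show ?thesis unfolding B_def
          using take_snoc_nth[of d "H i N (tp N)" "tp i"] lh[of i] l0[of i] iN dn by simp
      qed
      then have "P i" unfolding P_def using i j by simp
      with jmin[OF i(2)] show False by simp
    qed
    show ?thesis unfolding RET_def using two eq nu d_def by simp
  qed
  have T: "RET r j N" unfolding RET_def using T2 j(3) Rnu d_def unfolding B_def by auto
  show ?thesis using S T j by auto
qed


lemma seg0: "seg 0 N = R" unfolding seg_def using lenR by simp
lemma seg1: "seg 1 N = drop 1 R" unfolding seg_def using lenR by simp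

lemma seg_split: "1 \<le> j \<Longrightarrow> j \<le> N \<Longrightarrow> drop 1 R = seg 1 j @ tl (seg j N) \<and> last (seg 1 j) = hd (seg j N)"
proof -
  assume j: "1 \<le> j" "j \<le> N"
  have a: "seg 1 j = take j (drop 1 R)" unfolding seg_def by simp
  have b: "seg j N = drop j R" unfolding seg_def using lenR j by simp
  have c: "tl (drop j R) = drop j (drop 1 R)" by (simp add: drop_Suc tl_drop)
  have e: "drop 1 R = take j (drop 1 R) @ drop (Suc j) R"
    using append_take_drop_id[of j "drop 1 R"] by simp
  show ?thesis using a b c e seg_last[of 1 j] seg_hd[of j N] j by simp
qed

lemma seg_from:
  assumes S: "is_run n \<delta> S" and T: "is_run n \<delta> T" and l: "last S = hd T" and d: "drop 1 R = S @ tl T"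
  shows "\<exists>j. 1 \<le> j \<and> j \<le> N \<and> S = seg 1 j \<and> T = seg j N"
proof -
  have Sne: "S \<noteq> []" and Tne: "T \<noteq> []" using S T unfolding is_run_def by auto
  define j where "j = length S"
  have j1: "1 \<le> j" using Sne j_def by (cases S) auto
  have lenD: "length (drop 1 R) = N" by simp
  then have jN: "j \<le> N" using d j_def by (metis le_add1 length_append)
  have Sj: "S = take j (drop 1 R)" using d j_def by simp
  then have S1: "S = seg 1 j" unfolding seg_def by simp
  have tlT: "tl T = drop j (drop 1 R)" using d j_def by simp
  have "last S = S ! (j - 1)" using Sne j_def by (simp add: last_conv_nth)
  also have "\<dots> = (S @ tl T) ! (j - 1)"
  proof -
    have "j - 1 < length S" using j1 j_def by simp
    then show ?thesis by (simp add: nth_append)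
  qed
  also have "\<dots> = (drop 1 R) ! (j - 1)" using d by simp
  also have "\<dots> = R ! j" using j1 jN lenR by simp
  finally have hdT: "hd T = R ! j" using l by simp
  have "T = hd T # tl T" using Tne by simp
  also have "\<dots> = R ! j # drop (Suc j) R" using hdT tlT by simp
  also have "\<dots> = drop j R" using drop_Cons'[of j] jN by simp
  also have "\<dots> = seg j N" unfolding seg_def using lenR jN by simp
  finally show ?thesis using S1 j1 jN by blast
qed

lemma main_rn:
  assumes r: "1 \<le> r" "r \<le> n"
  shows "is_return n \<delta> r R \<longleftrightarrow>
     (length R = 2 \<and> performs \<delta> (R ! 0) (Pop r))
   \<or> (2 \<le> length R \<and>
        (is_read \<delta> (R ! 0) \<or> (\<exists>k < r. performs \<delta> (R ! 0) (Pop k))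
         \<or> (\<exists>k g. k \<noteq> r \<and> performs \<delta> (R ! 0) (Push k g)))
        \<and> is_return n \<delta> r (drop 1 R))
   \<or> (2 \<le> length R \<and> (\<exists>k g. r \<le> k \<and> performs \<delta> (R ! 0) (Push k g) \<and>
        (\<exists>S T. is_run n \<delta> S \<and> is_run n \<delta> T \<and> last S = hd T \<and> drop 1 R = S @ tl T \<and>
               is_return n \<delta> k S \<and> is_return n \<delta> r T)))"
  (is "?L \<longleftrightarrow> ?A \<or> ?B \<or> ?C")
proof -
  have L: "?L \<longleftrightarrow> RET r 0 N" using retS[of 0 N r] r seg0 by simp
  have len2: "length R = 2 \<longleftrightarrow> N = 1" "2 \<le> length R \<longleftrightarrow> 1 \<le> N" using lenR by auto
  have D1: "1 \<le> N \<Longrightarrow> is_return n \<delta> r (drop 1 R) \<longleftrightarrow> RET r 1 N" using retS[of 1 N r] r seg1 by simp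
  show ?thesis
  proof
    assume "?L"
    then have h: "RET r 0 N" using L by simp
    have N1: "1 \<le> N" using RET_lt[OF h _ _ r] by simp
    show "?A \<or> ?B \<or> ?C"
    using so0[OF N1]
    proof (cases rule: stepok_cases)
      case (rd f)
      then have "RET r 1 N" using L_read[OF r N1 rd(1)] h by simp
      then have ?B using rd(1) N1 len2 D1 unfolding is_read_def by auto
      then show ?thesis by simp
    next
      case (pp q k)
      consider "k < r" | "k = r" | "r < k" by linarith
      then show ?thesis
      proof cases
        case 1
        then have "RET r 1 N" using L_popless[OF r N1 pp(1) 1] h by simp
        then have ?B using pp(1) 1 N1 len2 D1 unfolding performs_def by auto
        then show ?thesis by simp
      next
        case 2
        then have "N = 1" using L_popeq1[OF r N1 _ h] pp(1) by simp
        then have ?A using pp(1) 2 len2 unfolding performs_def by auto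
        then show ?thesis by simp
      next
        case 3
        then show ?thesis using L_popmore[OF r N1 pp(1) 3] h by simp
      qed
    next
      case (ps q k g)
      consider "k < r" | "k = r" | "r < k" by linarith
      then show ?thesis
      proof cases
        case 1
        then have "RET r 1 N" using L_pushless[OF r N1 ps(1) 1] h by simp
        then have ?B using ps(1) 1 N1 len2 D1 unfolding performs_def by auto
        then show ?thesis by simp
      next
        case 2
        then obtain j where j: "1 \<le> j" "j \<le> N" "RET r 1 j" "RET r j N"
          using L_push3_fwd_eq[OF r _ h] ps(1) by auto
        have "is_return n \<delta> k (seg 1 j)" "is_return n \<delta> r (seg j N)"
          using retS[of 1 j k] retS[of j N r] j r 2 by auto
        moreover have "is_run n \<delta> (seg 1 j)" "is_run n \<delta> (seg j N)" using seg_run j by auto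
        moreover have "drop 1 R = seg 1 j @ tl (seg j N) \<and> last (seg 1 j) = hd (seg j N)" using seg_split j by simp
        ultimately have ?C using ps(1) 2 N1 len2 unfolding performs_def by blast
        then show ?thesis by simp
      next
        case 3
        from L_push3_fwd_gt[OF r ps(1) 3 h]
        show ?thesis
        proof
          assume "RET r 1 N"
          then have ?B using ps(1) 3 N1 len2 D1 unfolding performs_def by auto
          then show ?thesis by simp
        next
          assume "\<exists>j. 1 \<le> j \<and> j \<le> N \<and> RET k 1 j \<and> RET r j N"
          then obtain j where j: "1 \<le> j" "j \<le> N" "RET k 1 j" "RET r j N" by auto
          have "is_return n \<delta> k (seg 1 j)" "is_return n \<delta> r (seg j N)"
            using retS[of 1 j k] retS[of j N r] j r 3 ps(3) by auto
          moreover have "is_run n \<delta> (seg 1 j)" "is_run n \<delta> (seg j N)" using seg_run j by auto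
          moreover have "drop 1 R = seg 1 j @ tl (seg j N) \<and> last (seg 1 j) = hd (seg j N)" using seg_split j by simp
          ultimately have ?C using ps(1) 3 N1 len2 unfolding performs_def by (metis less_imp_le)
          then show ?thesis by simp
        qed
      qed
    qed
  next
    assume "?A \<or> ?B \<or> ?C"
    then consider "?A" | "?B" | "?C" by blast
    then have "RET r 0 N"
    proof cases
      case 1
      then obtain q where q: "trans_at \<delta> (R ! 0) = Some (Op q (Pop r))" "N = 1"
        unfolding performs_def using len2 by auto
      show ?thesis using L_popeq2[OF r q(2) q(1)] .
    next
      case 2
      then have N1: "1 \<le> N" and h1: "RET r 1 N" using len2 D1 by auto
      from 2 consider (a) f where "trans_at \<delta> (R ! 0) = Some (Read f)"
        | (b) q k where "k < r" "trans_at \<delta> (R ! 0) = Some (Op q (Pop k))"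
        | (c) q k g where "k \<noteq> r" "trans_at \<delta> (R ! 0) = Some (Op q (Push k g))"
        unfolding is_read_def performs_def by blast
      then show ?thesis
      proof cases
        case a then show ?thesis using L_read[OF r N1 a] h1 by simp
      next
        case b then show ?thesis using L_popless[OF r N1 b(2) b(1)] h1 by simp
      next
        case c
        show ?thesis
        proof (cases "k < r")
          case True then show ?thesis using L_pushless[OF r N1 c(2) True] h1 by simp
        next
          case False
          then have "r < k" using c(1) by simp
          then show ?thesis using L_pushmore_back[OF r N1 c(2) _ h1] by simp
        qed
      qed
    next
      case 3
      then obtain k g q S T where N1: "1 \<le> N" and kr: "r \<le> k" and t: "trans_at \<delta> (R ! 0) = Some (Op q (Push k g))"
        and ST: "is_run n \<delta> S" "is_run n \<delta> T" "last S = hd T" "drop 1 R = S @ tl T"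
          "is_return n \<delta> k S" "is_return n \<delta> r T"
        unfolding performs_def using len2 by blast
      have kn: "k \<le> n" using st_push[OF so0[OF N1] t] by simp
      obtain j where j: "1 \<le> j" "j \<le> N" "S = seg 1 j" "T = seg j N" using seg_from[OF ST(1-4)] by blast
      have "RET k 1 j" using retS[of 1 j k] j ST(5) kr r kn by simp
      moreover have "RET r j N" using retS[of j N r] j ST(6) r by simp
      ultimately show ?thesis using L_push3_back[OF r t kr j(1,2)] by simp
    qed
    then show "?L" using L by simp
  qed
qed

end

theorem mainTheorem11:
  fixes n r :: nat
    and \<delta> :: "('q::finite, 'g::finite, 'a::finite) delta"
    and R :: "('q, 'g) config list"
  assumes "is_dpda n \<delta>" and "1 \<le> r" and "r \<le> n" and "is_run n \<delta> R"
  shows "is_return n \<delta> r R \<longleftrightarrow>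
     (length R = 2 \<and> performs \<delta> (R ! 0) (Pop r))
   \<or> (2 \<le> length R \<and>
        (is_read \<delta> (R ! 0) \<or> (\<exists>k < r. performs \<delta> (R ! 0) (Pop k))
         \<or> (\<exists>k g. k \<noteq> r \<and> performs \<delta> (R ! 0) (Push k g)))
        \<and> is_return n \<delta> r (drop 1 R))
   \<or> (2 \<le> length R \<and> (\<exists>k g. r \<le> k \<and> performs \<delta> (R ! 0) (Push k g) \<and>
        (\<exists>S T. is_run n \<delta> S \<and> is_run n \<delta> T \<and> last S = hd T \<and> drop 1 R = S @ tl T \<and>
               is_return n \<delta> k S \<and> is_return n \<delta> r T)))"
proof -
  interpret rn n \<delta> R using assms(1,4) by unfold_locales
  show ?thesis using main_rn[OF assms(2,3)] .
qed


end
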